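(* Suppose $n=2^s$ or $n=3\cdot 2^s$, $n\ge 8$, and let $R_n={\mathbf Z}[\zeta_n,1/2]$ with $\zeta_n=e^{2\pi i/n}$. Then $\mathrm{PU}_2(R_n)/\mathrm{PSU}_2(R_n)\cong\mu_n/\mu_n^2\cong{\mathbf Z}/2{\mathbf Z}$, where $\mu_n$ is the group of $n$th roots of unity.
   Context: $\mathrm{U}_2(R_n)$ is the group of $2\times2$ matrices $A$ over $R_n$ with $A\overline A^T=I$, $\mathrm{SU}_2(R_n)$ those of determinant $1$; $\mathrm{PU}_2(R_n)$ is $\mathrm{U}_2(R_n)$ modulo scalar matrices and $\mathrm{PSU}_2(R_n)=\mathrm{SU}_2(R_n)/\{\pm1\}$, viewed as a subgroup of $\mathrm{PU}_2(R_n)$. *)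

theory Defs
  imports "HOL-Analysis.Analysis" "HOL-Algebra.Elementary_Groups"
    "HOL-Computational_Algebra.Polynomial"
begin

definition zeta :: "nat \<Rightarrow> complex" where
  "zeta n = cis (2 * pi / real n)"

definition Rn :: "nat \<Rightarrow> complex set" where
  "Rn n = {x. \<exists>(p :: int poly) (k :: nat).
              x = poly (map_poly of_int p) (zeta n) / 2 ^ k}"

definition ctrans :: "complex^2^2 \<Rightarrow> complex^2^2" where
  "ctrans A = (\<chi> i j. cnj (A $ j $ i))"

definition U2_set :: "nat \<Rightarrow> (complex^2^2) set" where
  "U2_set n = {A. (\<forall>i j. A $ i $ j \<in> Rn n) \<and> A ** ctrans A = mat 1}"

definition SU2_set :: "nat \<Rightarrow> (complex^2^2) set" where
  "SU2_set n = {A \<in> U2_set n. det A = 1}"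

definition U2 :: "nat \<Rightarrow> (complex^2^2) monoid" where
  "U2 n = \<lparr>carrier = U2_set n, mult = (**), one = mat 1\<rparr>"

definition scalars :: "nat \<Rightarrow> (complex^2^2) set" where
  "scalars n = {A \<in> U2_set n. \<exists>c. A = mat c}"

definition PU2 :: "nat \<Rightarrow> (complex^2^2) set monoid" where
  "PU2 n = U2 n Mod scalars n"

text \<open>PSU_2(R_n) = SU_2(R_n)/{+-1}, viewed as the subgroup of PU_2(R_n)
  given by the images of SU_2(R_n)\<close>
definition PSU2 :: "nat \<Rightarrow> (complex^2^2) set set" where
  "PSU2 n = (\<lambda>A. r_coset (U2 n) (scalars n) A) ` SU2_set n"

definition mu :: "nat \<Rightarrow> complex monoid" where
  "mu n = \<lparr>carrier = {z. z ^ n = 1}, mult = (*), one = 1\<rparr>"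

definition mu_squares :: "nat \<Rightarrow> complex set" where
  "mu_squares n = {z ^ 2 | z. z ^ n = 1}"

end

theory Submission
  imports Defs "HOL-Computational_Algebra.Polynomial_Factorial" "HOL-Computational_Algebra.Field_as_Ring"
begin

lemma binom_pow2_even:
  assumes "0 < k" "k < 2^r"
  shows "even ((2::nat)^r choose k)"
proof (rule ccontr)
  assume od: "odd (2^r choose k)"
  have "k * (2^r choose k) = 2^r * ((2^r - 1) choose (k - 1))"
    using assms(1) times_binomial_minus1_eq by blast
  hence "(2::nat)^r dvd k * (2^r choose k)" by simp
  moreover have "coprime ((2::nat)^r) (2^r choose k)"
    using od by (simp add: coprime_commute)  
  ultimately have "(2::nat)^r dvd k"
    using coprime_dvd_mult_left_iff by blast
  with assms show False by (simp add: nat_dvd_not_less)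
qed

lemma eisenstein2_aux:
  fixes F G H :: "int poly"
  assumes FGH: "F = G * H"
    and c0: "coeff F 0 = 2"
    and mid: "\<forall>k. 0 < k \<and> k < degree F \<longrightarrow> even (coeff F k)"
    and lc: "odd (lead_coeff F)"
    and G0: "even (coeff G 0)"
  shows "degree H = 0"
proof (rule ccontr)
  assume dH: "degree H \<noteq> 0"
  have F0: "F \<noteq> 0" using c0 by auto
  hence G0': "G \<noteq> 0" "H \<noteq> 0" using FGH by auto
  have degF: "degree F = degree G + degree H" using FGH G0' degree_mult_eq by blast
  have "lead_coeff F = lead_coeff G * lead_coeff H" using FGH lead_coeff_mult by blast
  hence lG: "odd (lead_coeff G)" using lc by auto
  have "coeff G 0 * coeff H 0 = 2" using FGH c0 by (simp add: coeff_mult_0)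
  then obtain g where "coeff G 0 = 2 * g" "2 * g * coeff H 0 = 2" using G0 by (metis evenE)
  hence "g * coeff H 0 = 1" by simp
  hence H0: "odd (coeff H 0)" by (metis even_mult_iff odd_one)
  define i where "i = (LEAST i. odd (coeff G i))"
  have oi: "odd (coeff G i)" unfolding i_def by (rule LeastI[of _ "degree G"]) (use lG in auto)
  have ile: "i \<le> degree G" unfolding i_def by (rule Least_le) (use lG in auto)
  have lt: "\<And>j. j < i \<Longrightarrow> even (coeff G j)" unfolding i_def using not_less_Least by blast
  have ipos: "0 < i" using oi G0 by (cases i) auto
  have iltF: "i < degree F" using ile degF dH by linarith
  have "coeff F i = (\<Sum>j\<le>i. coeff G j * coeff H (i - j))" using FGH coeff_mult by blast
  also have "\<dots> = (\<Sum>j<i. coeff G j * coeff H (i - j)) + coeff G i * coeff H 0"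
    by (simp add: lessThan_Suc_atMost[symmetric])
  finally have eq: "coeff F i = (\<Sum>j<i. coeff G j * coeff H (i - j)) + coeff G i * coeff H 0" .
  have "even (\<Sum>j<i. coeff G j * coeff H (i - j))"
    by (rule dvd_sum) (use lt in auto)
  moreover have "odd (coeff G i * coeff H 0)" using oi H0 by simp
  ultimately have "odd (coeff F i)" using eq by simp
  with mid ipos iltF show False by simp
qed

lemma eisenstein2:
  fixes F G H :: "int poly"
  assumes FGH: "F = G * H"
    and c0: "coeff F 0 = 2"
    and mid: "\<And>k. 0 < k \<Longrightarrow> k < degree F \<Longrightarrow> even (coeff F k)"
    and lc: "odd (lead_coeff F)"
  shows "degree G = 0 \<or> degree H = 0"
proof -
  have mid': "\<forall>k. 0 < k \<and> k < degree F \<longrightarrow> even (coeff F k)" using mid by blast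
  have "coeff G 0 * coeff H 0 = 2" using FGH c0 by (simp add: coeff_mult_0)
  hence "even (coeff G 0) \<or> even (coeff H 0)"
    by (metis even_mult_iff even_numeral)
  thus ?thesis
  proof
    assume "even (coeff G 0)"
    from eisenstein2_aux[OF FGH c0 mid' lc this] show ?thesis by blast
  next
    assume "even (coeff H 0)"
    moreover have "F = H * G" using FGH by (simp add: mult.commute)
    ultimately have "degree G = 0" using eisenstein2_aux[of F H G] c0 mid' lc by blast
    thus ?thesis by blast
  qed
qed

lemma pcompose_power: "pcompose (p ^ k) q = (pcompose p q) ^ k"
  by (induction k) (simp_all add: pcompose_1 pcompose_mult)

lemma cyc2_irred:
  fixes G H :: "int poly"
  assumes r: "r \<ge> 1"
    and fGH: "[:0,1:] ^ (2^r) + 1 = G * H"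
  shows "degree G = 0 \<or> degree H = 0"
proof -
  define M :: nat where "M = 2^r"
  have M0: "M > 0" "even M" using r by (auto simp: M_def)
  define q :: "int poly" where "q = [:1,1:]"
  define F where "F = pcompose ([:0,1:] ^ M + 1) q"
  have F: "F = q ^ M + 1"
    by (simp add: F_def pcompose_add pcompose_power pcompose_1 q_def pcompose_pCons)
  have FGH: "F = pcompose G q * pcompose H q"
    using fGH by (simp add: F_def M_def pcompose_mult)
  have degq: "degree (q ^ M) = M" by (simp add: q_def degree_power_eq)
  have degF: "degree F = M" using F degq M0
    by (metis add.commute degree_add_eq_left degree_1)
  have cq: "\<And>k. k \<le> M \<Longrightarrow> coeff (q ^ M) k = int (M choose k)"
    by (simp add: q_def coeff_linear_poly_power)
  have c0: "coeff F 0 = 2" using cq[of 0] by (simp add: F)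
  have mid: "even (coeff F k)" if "0 < k" "k < degree F" for k
  proof -
    have "coeff F k = int (M choose k)" using that cq[of k] degF by (simp add: F)
    moreover have "even (M choose k)" using binom_pow2_even[of k r] that degF by (simp add: M_def)
    ultimately show ?thesis by simp
  qed
  have lc: "odd (lead_coeff F)"
  proof -
    have "lead_coeff F = int (M choose M)" using cq[of M] degF M0 by (simp add: F)
    thus ?thesis by simp
  qed
  from eisenstein2[OF FGH c0 mid lc]
  show ?thesis by (simp add: degree_pcompose q_def)
qed


lemma map_poly_of_rat_mult:
  "map_poly (of_rat :: rat \<Rightarrow> 'a::field_char_0) (p * q) = map_poly of_rat p * map_poly of_rat q"
  by (rule poly_eqI) (simp add: coeff_map_poly coeff_mult of_rat_sum of_rat_mult)

lemma map_poly_of_rat_add: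
  "map_poly (of_rat :: rat \<Rightarrow> 'a::field_char_0) (p + q) = map_poly of_rat p + map_poly of_rat q"
  by (rule poly_eqI) (simp add: coeff_map_poly of_rat_add)

lemma map_poly_of_int_mult:
  "map_poly (of_int :: int \<Rightarrow> 'a::comm_ring_1) (p * q) = map_poly of_int p * map_poly of_int q"
  by (rule poly_eqI) (simp add: coeff_map_poly coeff_mult of_int_sum of_int_mult)

lemma map_poly_of_int_add:
  "map_poly (of_int :: int \<Rightarrow> 'a::comm_ring_1) (p + q) = map_poly of_int p + map_poly of_int q"
  by (rule poly_eqI) (simp add: coeff_map_poly)

lemma map_poly_of_int_diff:
  "map_poly (of_int :: int \<Rightarrow> 'a::comm_ring_1) (p - q) = map_poly of_int p - map_poly of_int q"
  by (rule poly_eqI) (simp add: coeff_map_poly)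

lemma map_poly_of_int_smult:
  "map_poly (of_int :: int \<Rightarrow> 'a::comm_ring_1) (smult c p) = smult (of_int c) (map_poly of_int p)"
  by (rule poly_eqI) (simp add: coeff_map_poly)

lemma map_poly_of_int_power:
  "map_poly (of_int :: int \<Rightarrow> 'a::comm_ring_1) (p ^ k) = (map_poly of_int p) ^ k"
  by (induction k) (simp_all add: map_poly_of_int_mult)

lemma map_poly_of_int_inj:
  assumes "map_poly (of_int :: int \<Rightarrow> 'a::ring_char_0) p = map_poly of_int q"
  shows "p = q"
proof (rule poly_eqI)
  fix n
  have "coeff (map_poly (of_int :: int \<Rightarrow> 'a) p) n = coeff (map_poly of_int q) n" using assms by simp
  thus "coeff p n = coeff q n" by (simp add: coeff_map_poly)
qed

lemma clear_denom:
  fixes g :: "rat poly"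
  shows "\<exists>d G. d \<noteq> (0::int) \<and> map_poly of_int G = smult (of_int d) g"
proof (induction g)
  case 0
  show ?case by (rule exI[of _ 1], rule exI[of _ 0]) simp
next
  case (pCons a g)
  then obtain d G where d0: "d \<noteq> 0" and dG: "map_poly of_int G = smult (of_int d) g" by blast
  obtain x y where a: "a = of_int x / of_int y" "y > 0"
    by (cases a) (auto simp: Fract_of_int_quotient)
  have c: "\<And>n. (of_int (coeff G n) :: rat) = of_int d * coeff g n"
  proof -
    fix n
    have "coeff (map_poly (of_int :: int \<Rightarrow> rat) G) n = coeff (smult (of_int d) g) n" using dG by simp
    thus "(of_int (coeff G n) :: rat) = of_int d * coeff g n" by (simp add: coeff_map_poly)
  qed
  show ?case
  proof (intro exI conjI)
    show "d * y \<noteq> 0" using d0 a by simp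
    show "map_poly of_int (pCons (x * d) (smult y G)) = smult (of_int (d * y)) (pCons a g)"
    proof (rule poly_eqI)
      fix n
      show "coeff (map_poly of_int (pCons (x * d) (smult y G))) n = coeff (smult (of_int (d * y)) (pCons a g)) n"
        using a c by (cases n) (auto simp: coeff_map_poly coeff_pCons field_simps)
    qed
  qed
qed

lemma rat_factor_to_int:
  fixes f :: "int poly" and g h :: "rat poly"
  assumes cf: "content f = 1" and fgh: "map_poly of_int f = g * h"
  shows "\<exists>G H. f = G * H \<and> degree G = degree g \<and> degree H = degree h"
proof -
  obtain d1 G1 where d1: "d1 \<noteq> 0" and G1: "map_poly of_int G1 = smult (of_int d1) g"
    using clear_denom by blast
  obtain d2 H1 where d2: "d2 \<noteq> 0" and H1: "map_poly of_int H1 = smult (of_int d2) h"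
    using clear_denom by blast
  define c where "c = d1 * d2"
  have c0: "c \<noteq> 0" using d1 d2 by (simp add: c_def)
  have "(map_poly of_int (G1 * H1) :: rat poly) = map_poly of_int (smult c f)"
    by (simp add: map_poly_of_int_mult map_poly_of_int_smult G1 H1 fgh c_def mult.commute)
  hence GH: "G1 * H1 = smult c f" by (rule map_poly_of_int_inj)
  have "content G1 * content H1 = normalize c"
    using arg_cong[OF GH, of content] cf by (simp add: content_mult)
  hence cc: "content G1 * content H1 = sgn c * c" by (simp add: abs_sgn mult.commute)
  have "smult c f = smult (content G1 * content H1) (primitive_part G1 * primitive_part H1)"
    using GH[symmetric] content_times_primitive_part[of G1] content_times_primitive_part[of H1]
    by (metis mult_smult_left mult_smult_right smult_smult)
  also have "\<dots> = smult c (smult (sgn c) (primitive_part G1 * primitive_part H1))"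
    by (simp add: cc mult.commute)
  finally have "f = smult (sgn c) (primitive_part G1 * primitive_part H1)"
    by (rule smult_cancel[OF c0])
  hence f: "f = smult (sgn c) (primitive_part G1) * primitive_part H1" by simp
  have "degree (map_poly (of_int :: int \<Rightarrow> rat) G1) = degree G1" by (simp add: degree_map_poly)
  hence dG1: "degree G1 = degree g" using G1 d1 by simp
  have "degree (map_poly (of_int :: int \<Rightarrow> rat) H1) = degree H1" by (simp add: degree_map_poly)
  hence dH1: "degree H1 = degree h" using H1 d2 by simp
  show ?thesis
    by (rule exI[of _ "smult (sgn c) (primitive_part G1)"], rule exI[of _ "primitive_part H1"])
       (use f dG1 dH1 c0 in \<open>simp add: sgn_0_0\<close>)
qed


lemma map_X_pow_plus1:
  "map_poly (of_int :: int \<Rightarrow> 'a::comm_ring_1) ([:0,1:] ^ M + 1) = [:0,1:] ^ M + 1"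
  by (simp add: map_poly_of_int_add map_poly_of_int_power map_poly_pCons)

lemma cyc2_indep:
  fixes x :: complex and p :: "int poly"
  assumes r: "r \<ge> 1" and x: "x ^ (2^r) = -1" and dp: "degree p < 2^r"
    and px: "poly (map_poly of_int p) x = 0"
  shows "p = 0"
proof (rule ccontr)
  assume p0: "p \<noteq> 0"
  define M where "M = (2::nat)^r"
  have M0: "M > 0" by (simp add: M_def)
  define f :: "int poly" where "f = [:0,1:]^M + 1"
  have degX: "degree ([:0,1:]^M :: int poly) = M" by (simp add: degree_power_eq)
  have degf: "degree f = M" unfolding f_def using degX M0
    by (metis degree_1 degree_add_eq_left)
  have lcf: "coeff f M = 1" unfolding f_def using M0 coeff_linear_power[of "0::int" M] by simp
  have cf: "content f = 1"
  proof -
    have "content f dvd 1" using content_dvd_coeff[of f M] lcf by simp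
    thus ?thesis by (metis normalize_content is_unit_normalize normalize_1)  
  qed
  define P where "P = (map_poly of_int p :: rat poly)"
  define Fq where "Fq = (map_poly of_int f :: rat poly)"
  define ev where "ev = (\<lambda>q::rat poly. poly (map_poly (of_rat :: rat \<Rightarrow> complex) q) x)"
  have ev_mult: "\<And>a b. ev (a*b) = ev a * ev b" by (simp add: ev_def map_poly_of_rat_mult)
  have ev_add: "\<And>a b. ev (a+b) = ev a + ev b" by (simp add: ev_def map_poly_of_rat_add)
  have ev_int: "\<And>q. ev (map_poly of_int q) = poly (map_poly of_int q) x"
    by (simp add: ev_def map_poly_map_poly o_def)
  have evP: "ev P = 0" using px ev_int P_def by simp
  have evF: "ev Fq = 0"
  proof -
    have "ev Fq = poly ([:0,1:]^M + 1) x" using ev_int Fq_def f_def map_X_pow_plus1 by metis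
    also have "\<dots> = x ^ M + 1" by (simp add: poly_power)
    finally show ?thesis using x M_def by simp
  qed
  define g where "g = gcd P Fq"
  have bez: "fst (bezout_coefficients P Fq) * P + snd (bezout_coefficients P Fq) * Fq = g"
    by (simp add: g_def bezout_coefficients_fst_snd)
  have evg: "ev g = 0" using bez ev_mult ev_add evP evF by (metis mult_zero_right add_0)
  have Fq0: "Fq \<noteq> 0"
  proof
    assume "Fq = 0"
    hence "map_poly (of_int :: int \<Rightarrow> rat) f = map_poly of_int 0" by (simp add: Fq_def)
    hence "f = 0" by (rule map_poly_of_int_inj)
    thus False using lcf by simp
  qed
  have P0: "P \<noteq> 0"
  proof
    assume "P = 0"
    hence "map_poly (of_int :: int \<Rightarrow> rat) p = map_poly of_int 0" by (simp add: P_def)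
    hence "p = 0" by (rule map_poly_of_int_inj)
    thus False using p0 by simp
  qed
  have g0: "g \<noteq> 0" using Fq0 by (simp add: g_def)
  have dg0: "degree g \<noteq> 0"
  proof
    assume "degree g = 0"
    then obtain c where gc: "g = [:c:]" by (metis degree_eq_zeroE)
    hence "c \<noteq> 0" using g0 by simp
    moreover have "ev g = of_rat c" by (simp add: ev_def gc map_poly_pCons)
    ultimately show False using evg by simp
  qed
  have "g dvd P" by (simp add: g_def)
  hence "degree g \<le> degree P" using P0 by (rule dvd_imp_degree_le)
  also have "degree P = degree p" by (simp add: P_def degree_map_poly)
  finally have dgM: "degree g < M" using dp M_def by simp
  have "g dvd Fq" by (simp add: g_def)
  then obtain h where Fgh: "Fq = g * h" by (rule dvdE)
  have h0: "h \<noteq> 0" using Fgh Fq0 by auto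
  have "degree Fq = M" using degf by (simp add: Fq_def degree_map_poly)
  hence "degree g + degree h = M" using Fgh g0 h0 by (simp add: degree_mult_eq)
  hence dh0: "degree h \<noteq> 0" using dgM by simp
  from rat_factor_to_int[OF cf Fgh[unfolded Fq_def]]
  obtain G H where "f = G * H" "degree G = degree g" "degree H = degree h" by blast
  with cyc2_irred[OF r, of G H] dg0 dh0 show False by (simp add: f_def M_def)
qed


lemma poly_in_subring:
  fixes S :: "complex set"
  assumes add: "\<And>a b. a \<in> S \<Longrightarrow> b \<in> S \<Longrightarrow> a + b \<in> S"
    and mul: "\<And>a b. a \<in> S \<Longrightarrow> b \<in> S \<Longrightarrow> a * b \<in> S"
    and int: "\<And>k::int. of_int k \<in> S" and z: "z \<in> S"
  shows "poly (map_poly of_int p) z \<in> S"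
proof (induction p)
  case 0 show ?case using int[of 0] by simp
next
  case (pCons a p)
  have "poly (map_poly of_int (pCons a p)) z = of_int a + z * poly (map_poly of_int p) z"
    by (simp add: map_poly_pCons)
  thus ?case using pCons add mul int z by simp
qed

lemma map_poly_of_int_sum:
  "map_poly (of_int :: int \<Rightarrow> 'a::comm_ring_1) (sum f A) = sum (\<lambda>i. map_poly of_int (f i)) A"
  by (induction A rule: infinite_finite_induct) (simp_all add: map_poly_of_int_add)

lemma map_poly_cnj_of_int: "map_poly cnj (map_poly (of_int :: int \<Rightarrow> complex) p) = map_poly of_int p"
  by (rule poly_eqI) (simp add: coeff_map_poly)

locale cyc =
  fixes s :: nat
  assumes s2: "2 \<le> s"
begin

definition N :: nat where "N = 2^s"
definition M :: nat where "M = 2^(s-1)"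
definition eta :: complex where "eta = cis (2*pi / real N)"

lemma N_M: "N = 2 * M"
proof -
  have "s = Suc (s - 1)" using s2 by simp
  hence "(2::nat)^s = 2 * 2^(s-1)" by (metis power_Suc)
  thus ?thesis by (simp add: N_def M_def)
qed

lemma M_ge2: "M \<ge> 2"
proof -
  have "(2::nat)^1 \<le> 2^(s-1)" using s2 by (intro power_increasing) auto
  thus ?thesis by (simp add: M_def)
qed

lemma M_even: "even M"
  using s2 by (simp add: M_def)

lemma N_pos: "N > 0" by (simp add: N_def)

lemma eta_pow: "eta ^ k = cis (2*pi*real k / real N)"
proof -
  have "eta ^ k = cis (real k * (2*pi/real N))" unfolding eta_def by (rule Complex.DeMoivre)
  thus ?thesis by (simp add: field_simps)
qed

lemma eta_N: "eta ^ N = 1"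
  using N_pos by (simp add: eta_pow)

lemma eta_M: "eta ^ M = -1"
proof -
  have "2*pi*real M / real N = pi" using N_M M_ge2 by simp
  thus ?thesis by (simp add: eta_pow)
qed

lemma eta_ne0: "eta \<noteq> 0" by (simp add: eta_def)

lemma eta_ne1: "eta \<noteq> 1"
  using eta_M by (metis one_neq_neg_one power_one)

lemma eta_pow_mod: "eta ^ k = eta ^ (k mod N)"
proof -
  have "eta ^ k = eta ^ (N * (k div N) + k mod N)" by (metis div_mult_mod_eq mult.commute)
  also have "\<dots> = (eta ^ N) ^ (k div N) * eta ^ (k mod N)" by (simp only: power_add power_mult)
  finally show ?thesis by (simp add: eta_N)
qed

lemma cnj_eta: "cnj eta = eta ^ (N - 1)"
proof -
  have "eta ^ (N - 1) * eta = 1" using eta_N N_pos by (metis power_Suc2 Suc_diff_1)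
  hence "eta ^ (N - 1) = inverse eta" using eta_ne0 by (simp add: field_simps)
  also have "inverse eta = cnj eta" by (simp add: eta_def cis_cnj)
  finally show ?thesis by simp
qed

lemma norm_eta: "norm eta = 1" by (simp add: eta_def)

lemma eta_mult_cnj: "eta * cnj eta = 1"
  by (metis complex_norm_square norm_eta of_real_1 one_power2)

definition ZE :: "complex set" where
  "ZE = {x. \<exists>p::int poly. x = poly (map_poly of_int p) eta}"

lemma ZE_add: "a \<in> ZE \<Longrightarrow> b \<in> ZE \<Longrightarrow> a + b \<in> ZE"
proof -
  assume "a \<in> ZE" "b \<in> ZE"
  then obtain p q where "a = poly (map_poly of_int p) eta" "b = poly (map_poly of_int q) eta"
    by (auto simp: ZE_def)
  hence "a + b = poly (map_poly of_int (p + q)) eta" by (simp add: map_poly_of_int_add)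
  thus ?thesis by (auto simp: ZE_def)
qed

lemma ZE_mult: "a \<in> ZE \<Longrightarrow> b \<in> ZE \<Longrightarrow> a * b \<in> ZE"
proof -
  assume "a \<in> ZE" "b \<in> ZE"
  then obtain p q where "a = poly (map_poly of_int p) eta" "b = poly (map_poly of_int q) eta"
    by (auto simp: ZE_def)
  hence "a * b = poly (map_poly of_int (p * q)) eta" by (simp add: map_poly_of_int_mult)
  thus ?thesis by (auto simp: ZE_def)
qed

lemma ZE_diff: "a \<in> ZE \<Longrightarrow> b \<in> ZE \<Longrightarrow> a - b \<in> ZE"
proof -
  assume "a \<in> ZE" "b \<in> ZE"
  then obtain p q where "a = poly (map_poly of_int p) eta" "b = poly (map_poly of_int q) eta"
    by (auto simp: ZE_def)
  hence "a - b = poly (map_poly of_int (p - q)) eta" by (simp add: map_poly_of_int_diff)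
  thus ?thesis by (auto simp: ZE_def)
qed

lemma ZE_int: "of_int k \<in> ZE"
  unfolding ZE_def by (auto intro!: exI[of _ "[:k:]"] simp: map_poly_pCons)

lemma ZE_0: "0 \<in> ZE" using ZE_int[of 0] by simp
lemma ZE_1: "1 \<in> ZE" using ZE_int[of 1] by simp
lemma ZE_2: "2 \<in> ZE" using ZE_int[of 2] by simp

lemma ZE_nat: "of_nat k \<in> ZE" using ZE_int[of "int k"] by simp

lemma ZE_uminus: "a \<in> ZE \<Longrightarrow> - a \<in> ZE" using ZE_diff[OF ZE_0] by simp

lemma ZE_eta: "eta \<in> ZE"
  unfolding ZE_def by (auto intro!: exI[of _ "[:0,1:]"] simp: map_poly_pCons)

lemma ZE_pow: "a \<in> ZE \<Longrightarrow> a ^ k \<in> ZE"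
  by (induction k) (simp_all add: ZE_1 ZE_mult)

lemma ZE_sum: "(\<And>i. i \<in> A \<Longrightarrow> f i \<in> ZE) \<Longrightarrow> sum f A \<in> ZE"
  by (induction A rule: infinite_finite_induct) (simp_all add: ZE_0 ZE_add)

lemma ZE_poly: "z \<in> ZE \<Longrightarrow> poly (map_poly of_int p) z \<in> ZE"
  by (rule poly_in_subring) (simp_all add: ZE_add ZE_mult ZE_int)

lemma ZE_cnj: "a \<in> ZE \<Longrightarrow> cnj a \<in> ZE"
proof -
  assume "a \<in> ZE"
  then obtain p where a: "a = poly (map_poly of_int p) eta" by (auto simp: ZE_def)
  have "cnj a = poly (map_poly of_int p) (cnj eta)"
    by (simp add: a poly_cnj map_poly_cnj_of_int)
  also have "\<dots> \<in> ZE" by (rule ZE_poly) (simp add: cnj_eta ZE_pow ZE_eta)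
  finally show ?thesis .
qed

lemma ZE_eta_shift:
  "eta * (\<Sum>j<M. of_int (c j) * eta^j) =
   (\<Sum>j<M. of_int (if j = 0 then - c (M-1) else c (j-1)) * eta^j)"
proof -
  obtain M' where M': "M = Suc M'" using M_ge2 by (cases M) auto
  have "eta * (\<Sum>j<M. of_int (c j) * eta^j) = (\<Sum>j<M. of_int (c j) * eta^(Suc j))"
    by (simp add: sum_distrib_left mult_ac)
  also have "\<dots> = (\<Sum>j<M'. of_int (c j) * eta^(Suc j)) + of_int (c M') * eta ^ M"
    by (simp add: M')
  also have "\<dots> = (\<Sum>j<M'. of_int (c j) * eta^(Suc j)) - of_int (c M')"
    by (simp add: eta_M)
  also have "\<dots> = (\<Sum>j<M. of_int (if j = 0 then - c (M-1) else c (j-1)) * eta^j)"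
    unfolding M' sum.lessThan_Suc_shift by simp
  finally show ?thesis .
qed

definition RS :: "complex set" where
  "RS = {x. \<exists>c::nat \<Rightarrow> int. x = (\<Sum>j<M. of_int (c j) * eta^j)}"

lemma RS_add: "a \<in> RS \<Longrightarrow> b \<in> RS \<Longrightarrow> a + b \<in> RS"
proof -
  assume "a \<in> RS" "b \<in> RS"
  then obtain c d where "a = (\<Sum>j<M. of_int (c j) * eta^j)" "b = (\<Sum>j<M. of_int (d j) * eta^j)"
    by (auto simp: RS_def)
  hence "a + b = (\<Sum>j<M. of_int (c j + d j) * eta^j)" by (simp add: sum.distrib distrib_right)
  thus ?thesis unfolding RS_def mem_Collect_eq by (rule exI[where x="\<lambda>j. c j + d j"])
qed

lemma RS_int: "of_int k \<in> RS"
proof -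
  obtain M' where M': "M = Suc M'" using M_ge2 by (cases M) auto
  have "(\<Sum>j<M. of_int (if j = 0 then k else 0) * eta^j) = (of_int k :: complex)"
    unfolding M' sum.lessThan_Suc_shift by simp
  hence "of_int k = (\<Sum>j<M. of_int (if j = 0 then k else 0) * eta^j)" by simp
  thus ?thesis unfolding RS_def mem_Collect_eq by (rule exI[where x="\<lambda>j. if j = 0 then k else 0"])
qed

lemma RS_eta: "a \<in> RS \<Longrightarrow> eta * a \<in> RS"
proof -
  assume "a \<in> RS"
  then obtain c where "a = (\<Sum>j<M. of_int (c j) * eta^j)" by (auto simp: RS_def)
  hence "eta * a = (\<Sum>j<M. of_int (if j = 0 then - c (M-1) else c (j-1)) * eta^j)"
    using ZE_eta_shift by simp
  thus ?thesis unfolding RS_def mem_Collect_eq by (rule exI[where x="\<lambda>j. if j = 0 then - c (M-1) else c (j-1)"])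
qed

lemma ZE_RS: "a \<in> ZE \<Longrightarrow> a \<in> RS"
proof -
  assume "a \<in> ZE"
  then obtain p where a: "a = poly (map_poly of_int p) eta" by (auto simp: ZE_def)
  have "poly (map_poly of_int p) eta \<in> RS"
  proof (induction p)
    case 0 show ?case using RS_int[of 0] by simp
  next
    case (pCons b p)
    have "poly (map_poly of_int (pCons b p)) eta = of_int b + eta * poly (map_poly of_int p) eta"
      by (simp add: map_poly_pCons)
    thus ?case using pCons RS_add RS_int RS_eta by simp
  qed
  thus ?thesis using a by simp
qed

lemma RS_ZE: "(\<Sum>j<M. of_int (c j) * eta^j) \<in> ZE"
  by (rule ZE_sum) (simp add: ZE_mult ZE_int ZE_pow ZE_eta)

lemma coord_unique0:
  assumes "(\<Sum>j<M. of_int (c j) * eta^j) = 0" "j < M"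
  shows "c j = 0"
proof -
  define p :: "int poly" where "p = (\<Sum>i<M. monom (c i) i)"
  have "poly (map_poly of_int p) eta = (\<Sum>i<M. of_int (c i) * eta^i)"
    by (simp add: p_def map_poly_of_int_sum map_poly_monom poly_sum poly_monom)
  hence pz: "poly (map_poly of_int p) eta = 0" using assms by simp
  have cp: "coeff p k = (if k < M then c k else 0)" for k
    by (simp add: p_def coeff_sum coeff_monom)
  have "degree p \<le> M - 1" by (rule degree_le) (use cp in auto)
  hence dp: "degree p < 2^(s-1)" using M_ge2 by (simp add: M_def)
  have "eta ^ (2^(s-1)) = -1" using eta_M by (simp add: M_def)
  moreover have "s - 1 \<ge> 1" using s2 by simp
  ultimately have "p = 0" using cyc2_indep dp pz by blast
  thus ?thesis using cp[of j] assms(2) by simp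
qed

lemma coord_unique:
  assumes "(\<Sum>j<M. of_int (c j) * eta^j) = (\<Sum>j<M. of_int (d j) * eta^j)" "j < M"
  shows "c j = d j"
proof -
  have "(\<Sum>j<M. of_int (c j - d j) * eta^j) = (0::complex)"
    using assms(1) by (simp add: sum_subtractf left_diff_distrib)
  thus ?thesis using coord_unique0[of "\<lambda>j. c j - d j" j] assms(2) by simp
qed

definition cf :: "complex \<Rightarrow> nat \<Rightarrow> int" where
  "cf x = (SOME c. x = (\<Sum>j<M. of_int (c j) * eta^j))"

lemma cf_rep: "x \<in> ZE \<Longrightarrow> x = (\<Sum>j<M. of_int (cf x j) * eta^j)"
proof -
  assume "x \<in> ZE"
  then obtain c where c: "x = (\<Sum>j<M. of_int (c j) * eta^j)" using ZE_RS by (auto simp: RS_def)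
  show ?thesis unfolding cf_def
    using someI[where P="\<lambda>c. x = (\<Sum>j<M. of_int (c j) * eta^j)" and x=c] c by simp
qed

lemma cf_eq: "x = (\<Sum>j<M. of_int (c j) * eta^j) \<Longrightarrow> j < M \<Longrightarrow> cf x j = c j"
  using cf_rep[of x] RS_ZE[of c] coord_unique[of "cf x" c j] by simp

end

context cyc begin

definition pp :: complex where "pp = 1 - eta"
definition dv :: "complex \<Rightarrow> complex \<Rightarrow> bool" where "dv a b \<longleftrightarrow> (\<exists>c\<in>ZE. b = a * c)"

lemma pp_ZE: "pp \<in> ZE" by (simp add: pp_def ZE_diff ZE_1 ZE_eta)
lemma pp_ne0: "pp \<noteq> 0" using eta_ne1 by (simp add: pp_def)

lemma dvI: "c \<in> ZE \<Longrightarrow> b = a * c \<Longrightarrow> dv a b" unfolding dv_def by blast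
lemma dvE: "dv a b \<Longrightarrow> (\<And>c. c \<in> ZE \<Longrightarrow> b = a * c \<Longrightarrow> P) \<Longrightarrow> P" unfolding dv_def by blast

lemma dv_0: "dv a 0" by (rule dvI[OF ZE_0]) simp
lemma dv_refl: "dv a a" by (rule dvI[OF ZE_1]) simp
lemma dv_1: "a \<in> ZE \<Longrightarrow> dv 1 a" by (rule dvI) auto
lemma dv_add: "dv a x \<Longrightarrow> dv a y \<Longrightarrow> dv a (x + y)"
proof -
  assume "dv a x" "dv a y"
  then obtain c d where "c \<in> ZE" "x = a * c" "d \<in> ZE" "y = a * d" by (metis dvE)
  thus ?thesis by (intro dvI[of "c + d"]) (simp_all add: ZE_add distrib_left)
qed
lemma dv_diff: "dv a x \<Longrightarrow> dv a y \<Longrightarrow> dv a (x - y)"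
proof -
  assume "dv a x" "dv a y"
  then obtain c d where "c \<in> ZE" "x = a * c" "d \<in> ZE" "y = a * d" by (metis dvE)
  thus ?thesis by (intro dvI[of "c - d"]) (simp_all add: ZE_diff right_diff_distrib)
qed
lemma dv_uminus: "dv a x \<Longrightarrow> dv a (- x)"
proof -
  assume "dv a x"
  then obtain c where "c \<in> ZE" "x = a * c" by (rule dvE)
  thus ?thesis by (intro dvI[of "- c"]) (simp_all add: ZE_uminus)
qed
lemma dv_multR: "dv a x \<Longrightarrow> y \<in> ZE \<Longrightarrow> dv a (x * y)"
proof -
  assume "dv a x" "y \<in> ZE"
  from \<open>dv a x\<close> obtain c where "c \<in> ZE" "x = a * c" by (rule dvE)
  thus ?thesis using \<open>y \<in> ZE\<close> by (intro dvI[of "c * y"]) (simp_all add: ZE_mult mult.assoc)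
qed
lemma dv_multL: "dv a x \<Longrightarrow> y \<in> ZE \<Longrightarrow> dv a (y * x)"
  using dv_multR by (simp add: mult.commute)
lemma dv_mult: "dv a x \<Longrightarrow> dv b y \<Longrightarrow> dv (a * b) (x * y)"
proof -
  assume "dv a x" "dv b y"
  then obtain c d where "c \<in> ZE" "x = a * c" "d \<in> ZE" "y = b * d" by (metis dvE)
  thus ?thesis by (intro dvI[of "c * d"]) (simp_all add: ZE_mult mult_ac)
qed
lemma dv_trans: "dv a b \<Longrightarrow> dv b c \<Longrightarrow> dv a c"
proof -
  assume "dv a b" "dv b c"
  then obtain d e where "d \<in> ZE" "b = a * d" "e \<in> ZE" "c = b * e" by (metis dvE)
  thus ?thesis by (intro dvI[of "d * e"]) (simp_all add: ZE_mult mult_ac)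
qed
lemma dv_sum: "(\<And>i. i \<in> A \<Longrightarrow> dv a (f i)) \<Longrightarrow> dv a (sum f A)"
  by (induction A rule: infinite_finite_induct) (simp_all add: dv_0 dv_add)
lemma dv_pp_pow: "m \<le> k \<Longrightarrow> dv (pp^m) (pp^k)"
proof -
  assume "m \<le> k"
  hence "pp^k = pp^m * pp^(k-m)" by (simp add: power_add[symmetric])
  thus ?thesis by (intro dvI[OF ZE_pow[OF pp_ZE]])
qed
lemma dv_pow_le: "m \<le> k \<Longrightarrow> dv (pp^k) x \<Longrightarrow> dv (pp^m) x"
  using dv_pp_pow dv_trans by blast
lemma dv_cancel: "c \<noteq> 0 \<Longrightarrow> dv (c * a) (c * b) \<Longrightarrow> dv a b"
  by (elim dvE, rule dvI) (auto simp: mult.assoc)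
lemma dv_ZE: "dv a b \<Longrightarrow> a \<in> ZE \<Longrightarrow> b \<in> ZE"
  by (elim dvE) (simp add: ZE_mult)

lemma frob:
  assumes a: "a \<in> ZE" and b: "b \<in> ZE"
  shows "\<exists>w\<in>ZE. (a - b)^(2^r) = a^(2^r) - b^(2^r) + 2*w"
proof (induction r)
  case 0
  show ?case using ZE_0 by auto
next
  case (Suc r)
  then obtain w where w: "w \<in> ZE" "(a - b)^(2^r) = a^(2^r) - b^(2^r) + 2*w" by blast
  define A where "A = a^(2^r)"
  define B where "B = b^(2^r)"
  have AB: "A \<in> ZE" "B \<in> ZE" using a b by (simp_all add: A_def B_def ZE_pow)
  have p2: "\<And>x::complex. x^(2^Suc r) = (x^(2^r))^2" by (simp add: power_mult[symmetric] mult.commute)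
  have "(a - b)^(2^Suc r) = (A - B + 2*w)^2" using w(2) p2 by (simp add: A_def B_def)
  also have "\<dots> = A^2 - B^2 + 2 * (B^2 - A*B + 2*w*(A - B) + 2*w^2)"
    by (simp add: power2_eq_square algebra_simps)
  finally have eq: "(a - b)^(2^Suc r) = A^2 - B^2 + 2 * (B^2 - A*B + 2*w*(A - B) + 2*w^2)" .
  have "A^2 = a^(2^Suc r)" "B^2 = b^(2^Suc r)" using p2 by (simp_all add: A_def B_def)
  with eq have "(a - b)^(2^Suc r) = a^(2^Suc r) - b^(2^Suc r) + 2 * (B^2 - A*B + 2*w*(A - B) + 2*w^2)" by simp
  thus ?case
    using AB w(1) by (intro bexI[of _ "B^2 - A*B + 2*w*(A - B) + 2*w^2"])
      (simp_all add: ZE_add ZE_diff ZE_mult ZE_pow ZE_2)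
qed

lemma ppM_two: "\<exists>w\<in>ZE. pp^M = 2 * w"
proof -
  obtain w where w: "w \<in> ZE" "(1 - eta)^(2^(s-1)) = 1^(2^(s-1)) - eta^(2^(s-1)) + 2*w"
    using frob[OF ZE_1 ZE_eta] by blast
  have "pp^M = 2 * (1 + w)" using w(2) eta_M by (simp add: pp_def M_def)
  thus ?thesis using w(1) ZE_add[OF ZE_1] by blast
qed

lemma two_ppM: "dv (pp^M) 2"
proof -
  obtain M' where M': "M = Suc M'" using M_ge2 by (cases M) auto
  define T where "T i = of_nat (M choose Suc i) * (-pp)^(Suc i)" for i
  have "eta^M = (-pp + 1)^M" by (simp add: pp_def)
  also have "\<dots> = (\<Sum>k\<le>M. of_nat (M choose k) * (-pp)^k * 1^(M-k))" by (rule binomial_ring)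
  also have "\<dots> = 1 + (\<Sum>i\<le>M'. T i)" unfolding M' sum.atMost_Suc_shift by (simp add: T_def M')
  finally have "- 1 = 1 + (\<Sum>i\<le>M'. T i)" using eta_M by simp
  hence two: "2 = - (\<Sum>i\<le>M'. T i)" by algebra
  have "\<forall>m. m \<le> M \<longrightarrow> dv (pp^m) 2"
  proof (intro allI)
    fix m show "m \<le> M \<longrightarrow> dv (pp^m) 2"
    proof (induction m)
      case 0 show ?case using dv_1[OF ZE_2] by simp
    next
      case (Suc m)
      show ?case
      proof
        assume le: "Suc m \<le> M"
        hence IH: "dv (pp^m) 2" using Suc by simp
        have "dv (pp^Suc m) (T i)" if i: "i \<le> M'" for i
        proof (cases "Suc i < M")
          case True
          have "even (M choose Suc i)" unfolding M_def by (rule binom_pow2_even) (use True in \<open>auto simp: M_def\<close>)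
          then obtain q where q: "M choose Suc i = 2 * q" by blast
          have Ti: "T i = (2 * pp^Suc i) * (of_nat q * (-1)^Suc i)"
            unfolding T_def q power_minus[of pp "Suc i"] of_nat_mult by (simp only: mult_ac of_nat_numeral)
          have d0: "dv (pp^m * pp^1) (2 * pp^Suc i)"
            by (rule dv_mult[OF IH dv_pp_pow]) simp
          have d: "dv (pp^Suc m) (2 * pp^Suc i)" using d0 by (simp add: mult.commute)
          show ?thesis unfolding Ti
            by (rule dv_multR[OF d]) (simp add: ZE_mult ZE_nat ZE_pow ZE_uminus ZE_1)
        next
          case False
          hence "Suc i = M" using i M' by simp
          hence "T i = pp^M" using M_even by (simp add: T_def power_minus[of pp M])
          thus ?thesis using dv_pp_pow[OF le] by simp
        qed
        hence "dv (pp^Suc m) (\<Sum>i\<le>M'. T i)" by (intro dv_sum) simp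
        thus "dv (pp^Suc m) 2" using two dv_uminus by metis
      qed
    qed
  qed
  thus ?thesis by simp
qed

lemma dv_pp_2: "dv pp 2"
  using dv_pow_le[of 1 M] two_ppM M_ge2 by simp

lemma int_rep: "of_int k = (\<Sum>j<M. of_int (if j = 0 then k else 0) * eta^j)"
proof -
  obtain M' where M': "M = Suc M'" using M_ge2 by (cases M) auto
  show ?thesis unfolding M' sum.lessThan_Suc_shift by simp
qed

lemma cf_int: "j < M \<Longrightarrow> cf (of_int k) j = (if j = 0 then k else 0)"
  using cf_eq[OF int_rep] by simp

lemma cf_scale: "y \<in> ZE \<Longrightarrow> j < M \<Longrightarrow> cf (of_int k * y) j = k * cf y j"
proof -
  assume y: "y \<in> ZE" and j: "j < M"
  have "of_int k * y = (\<Sum>j<M. of_int (k * cf y j) * eta^j)"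
    by (subst cf_rep[OF y]) (simp add: sum_distrib_left mult_ac)
  from cf_eq[OF this j] show ?thesis by simp
qed

lemma cf_add: "x \<in> ZE \<Longrightarrow> y \<in> ZE \<Longrightarrow> j < M \<Longrightarrow> cf (x + y) j = cf x j + cf y j"
proof -
  assume x: "x \<in> ZE" and y: "y \<in> ZE" and j: "j < M"
  have "x + y = (\<Sum>j<M. of_int (cf x j + cf y j) * eta^j)"
    by (subst cf_rep[OF x], subst cf_rep[OF y]) (simp add: sum.distrib distrib_right)
  from cf_eq[OF this j] show ?thesis by simp
qed

lemma pp_not_unit: "\<not> dv pp 1"
proof
  assume "dv pp 1"
  then obtain y where y: "y \<in> ZE" "1 = pp * y" by (rule dvE)
  obtain w where w: "w \<in> ZE" "pp^M = 2 * w" using ppM_two by blast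
  have "1 = (pp * y)^M" using y by simp
  also have "\<dots> = 2 * (w * y^M)" using w by (simp add: power_mult_distrib)
  finally have e: "of_int 1 = of_int 2 * (w * y^M)" by simp
  have "cf (of_int 1) 0 = 2 * cf (w * y^M) 0"
    using M_ge2 by (subst e, subst cf_scale) (simp_all add: ZE_mult ZE_pow w y)
  hence "2 * cf (w * y^M) 0 = 1" using M_ge2 cf_int[of 0 1] by simp
  thus False by presburger
qed

lemma int_dv: "dv pp (of_int a) \<longleftrightarrow> even a"
proof
  assume "even a"
  then obtain b where "a = 2 * b" by blast
  hence "of_int a = 2 * (of_int b :: complex)" by simp
  thus "dv pp (of_int a)" using dv_multR[OF dv_pp_2 ZE_int[of b]] by simp
next
  assume d: "dv pp (of_int a)"
  show "even a"
  proof (rule ccontr)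
    assume "odd a"
    then obtain b where "a = 2 * b + 1" by (metis oddE)
    hence "1 = of_int a - 2 * (of_int b :: complex)" by simp
    moreover have "dv pp (of_int a - 2 * of_int b)"
      by (rule dv_diff[OF d dv_multR[OF dv_pp_2 ZE_int]])
    ultimately show False using pp_not_unit by simp
  qed
qed

lemma dv_pp_pow_diff: "dv pp (eta^j - 1)"
proof -
  have "eta^j - 1 = pp * (- (\<Sum>i<j. eta^i))"
    using one_diff_power_eq[of eta j] by (simp add: pp_def algebra_simps)
  thus ?thesis by (intro dvI[where c="- (\<Sum>i<j. eta^i)"]) (simp_all add: ZE_uminus ZE_sum ZE_pow ZE_eta)
qed

lemma residue: "x \<in> ZE \<Longrightarrow> \<exists>a::int. dv pp (x - of_int a)"
proof -
  assume x: "x \<in> ZE"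
  have "x - of_int (\<Sum>j<M. cf x j) = (\<Sum>j<M. of_int (cf x j) * (eta^j - 1))"
    by (subst (1) cf_rep[OF x]) (simp add: algebra_simps sum_subtractf sum_distrib_left)
  moreover have "dv pp (\<Sum>j<M. of_int (cf x j) * (eta^j - 1))"
    by (intro dv_sum dv_multL[OF dv_pp_pow_diff ZE_int])
  ultimately show ?thesis by metis
qed

lemma pp_prime:
  assumes x: "x \<in> ZE" and y: "y \<in> ZE" and d: "dv pp (x * y)"
  shows "dv pp x \<or> dv pp y"
proof -
  obtain a where a: "dv pp (x - of_int a)" using residue[OF x] by blast
  obtain b where b: "dv pp (y - of_int b)" using residue[OF y] by blast
  have "x * y - of_int (a * b) = x * (y - of_int b) + of_int b * (x - of_int a)"
    by (simp add: algebra_simps)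
  moreover have "dv pp (x * (y - of_int b) + of_int b * (x - of_int a))"
    by (intro dv_add dv_multL[OF b x] dv_multL[OF a ZE_int])
  ultimately have "dv pp (x * y - of_int (a * b))" by simp
  hence "dv pp (of_int (a * b))" using dv_diff[OF d] by fastforce
  hence "even a \<or> even b" using int_dv[of "a * b"] by simp
  thus ?thesis
  proof
    assume "even a"
    hence "dv pp (of_int a)" using int_dv by simp
    hence "dv pp ((x - of_int a) + of_int a)" using a dv_add by blast
    thus ?thesis by simp
  next
    assume "even b"
    hence "dv pp (of_int b)" using int_dv by simp
    hence "dv pp ((y - of_int b) + of_int b)" using b dv_add by blast
    thus ?thesis by simp
  qed
qed

lemma val_finite:
  assumes x: "x \<in> ZE" and all: "\<And>m. dv (pp^m) x"
  shows "x = 0"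
proof (rule ccontr)
  assume x0: "x \<noteq> 0"
  have "\<exists>j<M. cf x j \<noteq> 0"
  proof (rule ccontr)
    assume "\<not> ?thesis"
    hence "x = (\<Sum>j<M. of_int 0 * eta^j)" using cf_rep[OF x] by (metis (no_types, lifting) sum.cong lessThan_iff)
    thus False using x0 by simp
  qed
  then obtain j where j: "j < M" "cf x j \<noteq> 0" by blast
  define k where "k = nat \<bar>cf x j\<bar>"
  obtain w where w: "w \<in> ZE" "pp^M = 2 * w" using ppM_two by blast
  obtain y where y: "y \<in> ZE" "x = pp^(M*k) * y" using all[of "M*k"] by (rule dvE)
  have xe: "x = of_int (2^k) * (w^k * y)" using y w by (simp add: power_mult power_mult_distrib)
  have "cf x j = 2^k * cf (w^k * y) j" unfolding xe
    by (rule cf_scale[OF _ j(1)]) (simp add: ZE_mult ZE_pow w y)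
  hence "(2::int)^k dvd cf x j" by simp
  hence "(2::int)^k \<le> \<bar>cf x j\<bar>" using dvd_imp_le_int[of "cf x j" "2^k"] j(2) by simp
  moreover have "int k < 2^k" by (metis of_nat_less_numeral_power_cancel_iff of_nat_numeral less_exp)
  ultimately show False by (simp add: k_def)
qed

lemma cnj_eta_ZE: "cnj eta \<in> ZE" using ZE_cnj[OF ZE_eta] .

lemma cnj_pp: "cnj pp = pp * (- cnj eta)"
  using eta_mult_cnj by (simp add: pp_def algebra_simps)

lemma dv_cnj: "dv (pp^m) x \<Longrightarrow> dv (pp^m) (cnj x)"
proof -
  assume "dv (pp^m) x"
  then obtain c where c: "c \<in> ZE" "x = pp^m * c" by (rule dvE)
  have "cnj x = (cnj pp)^m * cnj c" by (simp add: c)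
  also have "(cnj pp)^m = pp^m * (- cnj eta)^m" by (simp only: cnj_pp power_mult_distrib)
  finally have "cnj x = pp^m * ((- cnj eta)^m * cnj c)" by (simp add: mult.assoc)
  thus ?thesis by (intro dvI[of "(- cnj eta)^m * cnj c"]) (simp_all add: ZE_mult ZE_pow ZE_uminus cnj_eta_ZE ZE_cnj c)
qed

lemma cnj_res: "x \<in> ZE \<Longrightarrow> dv pp (cnj x - x)"
proof -
  assume x: "x \<in> ZE"
  obtain a where a: "dv pp (x - of_int a)" using residue[OF x] by blast
  have "dv pp (cnj (x - of_int a))" using dv_cnj[of 1 "x - of_int a"] a by simp
  hence "dv pp (cnj (x - of_int a) - (x - of_int a))" using a dv_diff by blast
  thus ?thesis by simp
qed

end

lemma parity_form: "even ((a::int)^2 - a*b + b^2) \<Longrightarrow> even a \<and> even b"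
  by (cases "even a"; cases "even b") (auto simp: power2_eq_square)

lemma small_form:
  fixes a b :: int
  assumes "a^2 + b^2 - a*b = 1"
  shows "(a = 1 \<and> b = 0) \<or> (a = -1 \<and> b = 0) \<or> (a = 0 \<and> b = 1) \<or> (a = 0 \<and> b = -1)
         \<or> (a = 1 \<and> b = 1) \<or> (a = -1 \<and> b = -1)"
proof -
  have "(2*a - b)^2 + 3 * b^2 = 4" using assms by (simp add: power2_eq_square algebra_simps)
  moreover have "(2*a - b)^2 \<ge> 0" by simp
  ultimately have "3 * b^2 \<le> 4" by linarith
  hence "b^2 \<le> 1" by linarith
  hence "\<bar>b\<bar> \<le> 1" by (simp add: abs_square_le_1)
  hence "b = 0 \<or> b = 1 \<or> b = -1" by linarith
  moreover {
    assume "b = 0"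
    hence "a^2 = 1" using assms by simp
    hence "a = 1 \<or> a = -1" by (metis power2_eq_1_iff)
  }
  moreover {
    assume "b = 1"
    hence "a * (a - 1) = 0" using assms by (simp add: power2_eq_square algebra_simps)
    hence "a = 0 \<or> a = 1" by simp
  }
  moreover {
    assume "b = -1"
    hence "a * (a + 1) = 0" using assms by (simp add: power2_eq_square algebra_simps)
    hence "a = 0 \<or> a = -1" by (simp add: add_eq_0_iff)
  }
  ultimately show ?thesis by blast
qed

context cyc begin

lemma aniso:
  fixes Q :: "complex \<Rightarrow> complex \<Rightarrow> complex" and u u' :: complex
  assumes Qres: "\<And>A B. A \<in> ZE \<Longrightarrow> B \<in> ZE \<Longrightarrow> dv pp (Q A B - (A^2 - A*B + B^2))"
    and Qsc: "\<And>A B. Q (pp*A) (pp*B) = pp^2 * (u * Q A B)"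
    and u': "u' \<in> ZE" and uu: "u' * u = 1"
  shows "A \<in> ZE \<Longrightarrow> B \<in> ZE \<Longrightarrow> dv (pp^(2*j)) (Q A B) \<Longrightarrow> dv (pp^j) A \<and> dv (pp^j) B"
proof (induction j arbitrary: A B)
  case 0 thus ?case using dv_1 by simp
next
  case (Suc j)
  have A: "A \<in> ZE" and B: "B \<in> ZE" using Suc by auto
  have "dv pp (Q A B)" using dv_pow_le[of 1 "2 * Suc j"] Suc.prems(3) by simp
  hence "dv pp (Q A B - (Q A B - (A^2 - A*B + B^2)))" using Qres[OF A B] dv_diff by blast
  hence d1: "dv pp (A^2 - A*B + B^2)" by (simp add: algebra_simps)
  obtain a where a: "dv pp (A - of_int a)" using residue[OF A] by blast
  obtain b where b: "dv pp (B - of_int b)" using residue[OF B] by blast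
  have eq: "A^2 - A*B + B^2 - of_int (a^2 - a*b + b^2) =
     (A - of_int a) * (A + of_int a) - ((A - of_int a) * B + of_int a * (B - of_int b))
       + (B - of_int b) * (B + of_int b)"
    by (simp add: power2_eq_square algebra_simps)
  have "dv pp ((A - of_int a) * (A + of_int a) - ((A - of_int a) * B + of_int a * (B - of_int b))
       + (B - of_int b) * (B + of_int b))"
    by (intro dv_add dv_diff dv_multR[OF a] dv_multR[OF b] dv_multL[OF b])
       (simp_all add: A B ZE_add ZE_int)
  hence "dv pp (A^2 - A*B + B^2 - of_int (a^2 - a*b + b^2))" using eq by simp
  hence "dv pp ((A^2 - A*B + B^2) - (A^2 - A*B + B^2 - of_int (a^2 - a*b + b^2)))"
    using d1 dv_diff by blast
  hence "dv pp (of_int (a^2 - a*b + b^2))" by (simp add: algebra_simps)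
  hence "even (a^2 - a*b + b^2)" using int_dv by blast
  hence ev: "even a" "even b" using parity_form by blast+
  have "dv pp ((A - of_int a) + of_int a)" using a ev(1) int_dv dv_add by blast
  then obtain A' where A': "A' \<in> ZE" "A = pp * A'" by (auto elim: dvE)
  have "dv pp ((B - of_int b) + of_int b)" using b ev(2) int_dv dv_add by blast
  then obtain B' where B': "B' \<in> ZE" "B = pp * B'" by (auto elim: dvE)
  have "Q A B = pp^2 * (u * Q A' B')" using Qsc A' B' by simp
  hence "dv (pp^2 * pp^(2*j)) (pp^2 * (u * Q A' B'))" using Suc.prems(3)
    by (simp add: power_add[symmetric])
  hence "dv (pp^(2*j)) (u * Q A' B')" by (rule dv_cancel[rotated]) (simp add: pp_ne0)
  hence "dv (pp^(2*j)) (u' * (u * Q A' B'))" by (rule dv_multL[OF _ u'])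
  hence "dv (pp^(2*j)) (Q A' B')" using uu by (simp add: mult.assoc[symmetric])
  from Suc.IH[OF A'(1) B'(1) this]
  have "dv (pp * pp^j) (pp * A') \<and> dv (pp * pp^j) (pp * B')"
    using dv_mult[OF dv_refl] by blast
  thus ?case using A' B' by simp
qed

lemma q_aniso:
  assumes A: "A \<in> ZE" and B: "B \<in> ZE" and q: "A^2 - A*B + B^2 = 0"
  shows "A = 0 \<and> B = 0"
proof -
  have "dv (pp^j) A \<and> dv (pp^j) B" for j
  proof -
    have "dv (pp^(2*j)) (A^2 - A*B + B^2)" using q dv_0 by simp
    show ?thesis
      by (rule aniso[where Q="\<lambda>A B. A^2 - A*B + B^2" and u=1 and u'=1, OF _ _ ZE_1 _ A B \<open>dv (pp^(2*j)) (A^2 - A*B + B^2)\<close>])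
         (simp_all add: dv_0 power2_eq_square algebra_simps)
  qed
  thus ?thesis using val_finite A B by blast
qed

definition HF :: "complex \<Rightarrow> complex \<Rightarrow> complex" where
  "HF A B = A * cnj A + B * cnj B - A * cnj B"

lemma HF_ZE: "A \<in> ZE \<Longrightarrow> B \<in> ZE \<Longrightarrow> HF A B \<in> ZE"
  by (simp add: HF_def ZE_add ZE_diff ZE_mult ZE_cnj)

lemma HF_dv:
  assumes "A \<in> ZE" "B \<in> ZE" "dv (pp^(2*j)) (HF A B)"
  shows "dv (pp^j) A \<and> dv (pp^j) B"
proof (rule aniso[where Q=HF and u="- cnj eta" and u'="- eta", OF _ _ _ _ assms])
  fix A B assume A: "A \<in> ZE" and B: "B \<in> ZE"
  have "HF A B - (A^2 - A*B + B^2) = A * (cnj A - A) + B * (cnj B - B) - A * (cnj B - B)"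
    by (simp add: HF_def power2_eq_square algebra_simps)
  moreover have "dv pp (A * (cnj A - A) + B * (cnj B - B) - A * (cnj B - B))"
    by (intro dv_add dv_diff dv_multL cnj_res A B)
  ultimately show "dv pp (HF A B - (A^2 - A*B + B^2))" by simp
next
  fix A B
  show "HF (pp*A) (pp*B) = pp^2 * (- cnj eta * HF A B)"
    by (simp add: HF_def cnj_pp power2_eq_square algebra_simps)
next
  show "- eta \<in> ZE" by (simp add: ZE_uminus ZE_eta)
next
  show "- eta * - cnj eta = 1" using eta_mult_cnj by simp
qed

definition om :: complex where "om = cis (2*pi/3)"

lemma om3: "om^3 = 1"
proof -
  have "om^3 = cis (real 3 * (2*pi/3))" unfolding om_def by (rule Complex.DeMoivre)
  thus ?thesis by simp
qed

lemma om_ne1: "om \<noteq> 1"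
proof -
  have "sin (2*pi/3) > 0" by (rule sin_gt_zero) auto
  hence "Im om \<noteq> 0" by (simp add: om_def)
  thus ?thesis by auto
qed

lemma om_quad: "om^2 + om + 1 = 0"
proof -
  have "(om - 1) * (om^2 + om + 1) = om^3 - 1" by (simp add: power2_eq_square power3_eq_cube algebra_simps)
  also have "\<dots> = 0" using om3 by simp
  finally show ?thesis using om_ne1 by simp
qed

lemma cnj_om: "cnj om = - 1 - om"
proof -
  have "cnj om * om = 1"
    by (metis complex_norm_square mult.commute norm_cis of_real_1 om_def one_power2)
  thus ?thesis using om_quad by algebra
qed

lemma om_ne0: "om \<noteq> 0" by (simp add: om_def)

lemma om_indep:
  assumes A: "A \<in> ZE" and B: "B \<in> ZE" and e: "A + B * om = 0"
  shows "A = 0 \<and> B = 0"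
proof -
  have "A = - (B * om)" using e by (simp add: eq_neg_iff_add_eq_0)
  hence "A^2 - A*B + B^2 = B^2 * (om^2 + om + 1)" by (simp add: power2_eq_square algebra_simps)
  also have "\<dots> = 0" using om_quad by simp
  finally show ?thesis using q_aniso A B by blast
qed

end

context cyc begin

definition ZEW :: "complex set" where "ZEW = {x. \<exists>A\<in>ZE. \<exists>B\<in>ZE. x = A + B * om}"

lemma om2: "om^2 = - 1 - om" using om_quad by (simp add: algebra_simps eq_neg_iff_add_eq_0)

lemma ZEWI: "A \<in> ZE \<Longrightarrow> B \<in> ZE \<Longrightarrow> A + B * om \<in> ZEW" unfolding ZEW_def by blast
lemma ZEWE: "x \<in> ZEW \<Longrightarrow> (\<And>A B. A \<in> ZE \<Longrightarrow> B \<in> ZE \<Longrightarrow> x = A + B * om \<Longrightarrow> P) \<Longrightarrow> P"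
  unfolding ZEW_def by blast
lemma ZE_ZEW: "A \<in> ZE \<Longrightarrow> A \<in> ZEW" using ZEWI[of A 0] ZE_0 by simp
lemma ZEW_om: "om \<in> ZEW" using ZEWI[of 0 1] ZE_0 ZE_1 by simp
lemma ZEW_int: "of_int k \<in> ZEW" using ZE_ZEW ZE_int by blast
lemma ZEW_eta: "eta \<in> ZEW" using ZE_ZEW ZE_eta by blast

lemma ZEW_add: "x \<in> ZEW \<Longrightarrow> y \<in> ZEW \<Longrightarrow> x + y \<in> ZEW"
proof -
  assume "x \<in> ZEW" "y \<in> ZEW"
  then obtain A B C D where "A \<in> ZE" "B \<in> ZE" "C \<in> ZE" "D \<in> ZE" "x = A + B * om" "y = C + D * om"
    by (metis ZEWE)
  hence "x + y = (A + C) + (B + D) * om" "A + C \<in> ZE" "B + D \<in> ZE"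
    by (simp_all add: algebra_simps ZE_add)
  thus ?thesis using ZEWI by metis
qed

lemma ZEW_mult: "x \<in> ZEW \<Longrightarrow> y \<in> ZEW \<Longrightarrow> x * y \<in> ZEW"
proof -
  assume "x \<in> ZEW" "y \<in> ZEW"
  then obtain A B C D where "A \<in> ZE" "B \<in> ZE" "C \<in> ZE" "D \<in> ZE" "x = A + B * om" "y = C + D * om"
    by (metis ZEWE)
  moreover have "(A + B * om) * (C + D * om) = (A*C - B*D) + (A*D + B*C - B*D) * om"
    using om2 by algebra
  ultimately have "x * y = (A*C - B*D) + (A*D + B*C - B*D) * om" "A*C - B*D \<in> ZE" "A*D + B*C - B*D \<in> ZE"
    by (simp_all add: ZE_add ZE_diff ZE_mult)
  thus ?thesis using ZEWI by metis
qed

lemma ZEW_uminus: "x \<in> ZEW \<Longrightarrow> - x \<in> ZEW"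
  using ZEW_mult[OF ZEW_int[of "-1"]] by simp

lemma ZEW_diff: "x \<in> ZEW \<Longrightarrow> y \<in> ZEW \<Longrightarrow> x - y \<in> ZEW"
  using ZEW_add ZEW_uminus by (metis diff_conv_add_uminus)

lemma ZEW_pow: "x \<in> ZEW \<Longrightarrow> x ^ k \<in> ZEW"
  by (induction k) (simp_all add: ZEW_mult ZEW_int[of 1, simplified])

lemma ZEW_cnj: "x \<in> ZEW \<Longrightarrow> cnj x \<in> ZEW"
proof -
  assume "x \<in> ZEW"
  then obtain A B where AB: "A \<in> ZE" "B \<in> ZE" "x = A + B * om" by (rule ZEWE)
  hence "cnj x = (cnj A - cnj B) + (- cnj B) * om" by (simp add: cnj_om algebra_simps)
  thus ?thesis using AB ZEWI ZE_diff ZE_cnj ZE_uminus by metis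
qed

lemma cf_zero: "j < M \<Longrightarrow> cf 0 j = 0" using cf_int[of j 0] by simp

lemma cf_sum: "(\<And>i. i \<in> I \<Longrightarrow> f i \<in> ZE) \<Longrightarrow> j < M \<Longrightarrow> cf (sum f I) j = (\<Sum>i\<in>I. cf (f i) j)"
proof (induction I rule: infinite_finite_induct)
  case (insert i I)
  thus ?case by (simp add: cf_add ZE_sum)
qed (simp_all add: cf_zero)

lemma cf_diff: "x \<in> ZE \<Longrightarrow> y \<in> ZE \<Longrightarrow> j < M \<Longrightarrow> cf (x - y) j = cf x j - cf y j"
  using cf_add[of x "of_int (-1) * y" j] cf_scale[of y j "-1"] by (simp add: ZE_uminus)

lemma cf_uminus: "y \<in> ZE \<Longrightarrow> j < M \<Longrightarrow> cf (- y) j = - cf y j"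
  using cf_scale[of y j "-1"] by simp

lemma eta_pow_rep: "d < M \<Longrightarrow> eta^d = (\<Sum>i<M. of_int (if i = d then 1 else 0) * eta^i)"
proof -
  assume d: "d < M"
  have "(\<Sum>i<M. of_int (if i = d then 1 else 0) * eta^i) = (\<Sum>i<M. if i = d then eta^i else 0)"
    by (rule sum.cong) auto
  also have "\<dots> = eta^d" using d by (simp add: sum.delta)
  finally show ?thesis by simp
qed

lemma cf_eta_pow: "d < M \<Longrightarrow> cf (eta^d) 0 = (if d = 0 then 1 else 0)"
  using cf_eq[OF eta_pow_rep, of d 0] M_ge2 by simp

lemma cnj_eta_pow: "l \<le> N \<Longrightarrow> (cnj eta)^l = eta^(N - l)"
proof -
  assume l: "l \<le> N"
  have "(cnj eta)^l = (cnj eta)^l * (eta^l * eta^(N - l))"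
    using l eta_N by (simp add: power_add[symmetric])
  also have "\<dots> = (eta * cnj eta)^l * eta^(N - l)" by (simp add: power_mult_distrib mult_ac)
  finally show ?thesis using eta_mult_cnj by simp
qed

lemma cf_eta_pair: "j < M \<Longrightarrow> l < M \<Longrightarrow> cf (eta^j * (cnj eta)^l) 0 = (if j = l then 1 else 0)"
proof -
  assume j: "j < M" and l: "l < M"
  have "(cnj eta)^l = eta^(N-l)" using l N_M by (intro cnj_eta_pow) simp
  hence e: "eta^j * (cnj eta)^l = eta^(j + (N - l))" by (simp add: power_add)
  show ?thesis
  proof (cases "l \<le> j")
    case True
    have "j + (N - l) = N + (j - l)" using True l N_M by simp
    hence "eta^j * (cnj eta)^l = eta^(j - l)" using e eta_N by (simp add: power_add)
    thus ?thesis using cf_eta_pow[of "j - l"] j True by auto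
  next
    case False
    have "j + (N - l) = M + (M + j - l)" using False l N_M by simp
    hence "eta^j * (cnj eta)^l = - (eta^(M + j - l))" using e eta_M by (simp add: power_add)
    moreover have "cf (- (eta^(M + j - l))) 0 = 0"
      using cf_uminus[OF ZE_pow[OF ZE_eta], of 0 "M + j - l"] cf_eta_pow[of "M + j - l"] False l M_ge2 by simp
    ultimately show ?thesis using False by simp
  qed
qed

lemma cf0_mult_cnj:
  assumes A: "A \<in> ZE" and B: "B \<in> ZE"
  shows "cf (A * cnj B) 0 = (\<Sum>j<M. cf A j * cf B j)"
proof -
  have cB: "cnj B = (\<Sum>l<M. of_int (cf B l) * (cnj eta)^l)"
    by (subst cf_rep[OF B]) (simp add: cnj_sum)
  have "A * cnj B = (\<Sum>j<M. \<Sum>l<M. of_int (cf A j * cf B l) * (eta^j * (cnj eta)^l))"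
    by (subst cf_rep[OF A], subst cB) (simp add: sum_product mult_ac)
  hence "cf (A * cnj B) 0 = (\<Sum>j<M. \<Sum>l<M. cf A j * cf B l * cf (eta^j * (cnj eta)^l) 0)"
    using M_ge2
    by (simp add: cf_sum cf_scale ZE_sum ZE_mult ZE_int ZE_pow ZE_eta cnj_eta_ZE del: of_int_mult)
  also have "\<dots> = (\<Sum>j<M. \<Sum>l<M. if l = j then cf A j * cf B j else 0)"
    by (intro sum.cong refl) (auto simp: cf_eta_pair)
  also have "\<dots> = (\<Sum>j<M. cf A j * cf B j)" by (simp add: sum.delta)
  finally show ?thesis .
qed

end

context cyc begin

lemma sum_one_nonneg:
  fixes t :: "nat \<Rightarrow> int"
  assumes nn: "\<And>j. t j \<ge> 0" and s: "(\<Sum>j<M. t j) = 1"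
  shows "\<exists>j0<M. t j0 = 1 \<and> (\<forall>j<M. j \<noteq> j0 \<longrightarrow> t j = 0)"
proof -
  have "\<exists>j0<M. t j0 \<noteq> 0"
  proof (rule ccontr)
    assume "\<not> ?thesis"
    hence "(\<Sum>j<M. t j) = 0" by (intro sum.neutral) auto
    thus False using s by simp
  qed
  then obtain j0 where j0: "j0 < M" "t j0 \<noteq> 0" by blast
  have split: "(\<Sum>j<M. t j) = t j0 + (\<Sum>j\<in>{..<M} - {j0}. t j)"
    using j0(1) by (simp add: sum.remove)
  have rest: "(\<Sum>j\<in>{..<M} - {j0}. t j) \<ge> 0" by (rule sum_nonneg) (use nn in auto)
  have "t j0 \<ge> 1" using nn[of j0] j0(2) by linarith
  hence t1: "t j0 = 1" and r0: "(\<Sum>j\<in>{..<M} - {j0}. t j) = 0" using split s rest by linarith+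
  have "\<forall>j\<in>{..<M} - {j0}. t j = 0"
    using r0 sum_nonneg_eq_0_iff[of "{..<M} - {j0}" t] nn by auto
  thus ?thesis using j0(1) t1 by auto
qed

theorem nt_core:
  assumes x: "x \<in> ZEW" and n: "x * cnj x = 4^k"
  shows "\<exists>j e. x = 2^k * eta^j * om^e"
proof -
  obtain A B where A: "A \<in> ZE" and B: "B \<in> ZE" and xAB: "x = A + B * om" using x by (rule ZEWE)
  have cx: "cnj x = cnj A + cnj B * (- 1 - om)" by (simp add: xAB cnj_om)
  have "x * cnj x = HF A B + (B * cnj A - A * cnj B) * om"
    unfolding HF_def cx unfolding xAB using om2 by algebra
  hence "(HF A B - of_int (4^k)) + (B * cnj A - A * cnj B) * om = 0" using n by simp
  hence "HF A B - of_int (4^k) = 0"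
    using om_indep HF_ZE[OF A B] ZE_int[of "4^k"] A B
    by (meson ZE_cnj ZE_diff ZE_mult)
  hence H: "HF A B = 4^k" by simp
  obtain c where c: "c \<in> ZE" "2 = pp^M * c" using two_ppM by (rule dvE)
  have "(4::complex)^k = 2^(2*k)" by (simp add: power_mult)
  also have "\<dots> = (pp^M * c)^(2*k)" using c(2) by simp
  also have "\<dots> = pp^(2*(k*M)) * c^(2*k)"
    by (simp add: power_mult_distrib power_mult[symmetric] mult_ac)
  finally have "dv (pp^(2*(k*M))) (HF A B)" using H c(1) by (intro dvI[of "c^(2*k)"]) (simp_all add: ZE_pow)
  from HF_dv[OF A B this] have dA: "dv (pp^(k*M)) A" and dB: "dv (pp^(k*M)) B" by auto
  obtain w where w: "w \<in> ZE" "pp^M = 2 * w" using ppM_two by blast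
  have "pp^(k*M) = (pp^M)^k" by (simp add: power_mult[symmetric] mult.commute)
  hence ppk: "pp^(k*M) = 2^k * w^k" using w(2) by (simp add: power_mult_distrib)
  obtain A1 where A1: "A1 \<in> ZE" "A = pp^(k*M) * A1" using dA by (rule dvE)
  obtain B1 where B1: "B1 \<in> ZE" "B = pp^(k*M) * B1" using dB by (rule dvE)
  define A' where "A' = w^k * A1"
  define B' where "B' = w^k * B1"
  have A'Z: "A' \<in> ZE" and B'Z: "B' \<in> ZE" using A1 B1 w by (simp_all add: A'_def B'_def ZE_mult ZE_pow)
  have AA': "A = 2^k * A'" and BB': "B = 2^k * B'" using A1 B1 ppk by (simp_all add: A'_def B'_def mult_ac)
  have "HF A B = 4^k * HF A' B'"
    by (simp add: AA' BB' HF_def power_mult_distrib[symmetric] algebra_simps)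
  hence H1: "HF A' B' = 1" using H by simp
  define a where "a = cf A'"
  define b where "b = cf B'"
  define t where "t j = (a j)^2 + (b j)^2 - a j * b j" for j
  have "cf (HF A' B') 0 = (\<Sum>j<M. a j * a j) + (\<Sum>j<M. b j * b j) - (\<Sum>j<M. a j * b j)"
    unfolding HF_def using M_ge2 A'Z B'Z
    by (simp add: cf_add cf_diff cf0_mult_cnj ZE_add ZE_mult ZE_cnj a_def b_def)
  also have "\<dots> = (\<Sum>j<M. t j)"
    by (simp add: t_def sum.distrib sum_subtractf power2_eq_square)
  finally have "(\<Sum>j<M. t j) = 1" using H1 cf_int[of 0 1] M_ge2 by simp
  moreover have tnn: "t j \<ge> 0" for j
  proof -
    have "2 * t j = (a j)^2 + (b j)^2 + (a j - b j)^2" by (simp add: t_def power2_eq_square algebra_simps)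
    moreover have "(a j)^2 + (b j)^2 + (a j - b j)^2 \<ge> 0" by simp
    ultimately show ?thesis by linarith
  qed
  ultimately obtain j0 where j0: "j0 < M" "t j0 = 1" "\<And>j. j < M \<Longrightarrow> j \<noteq> j0 \<Longrightarrow> t j = 0"
    using sum_one_nonneg by blast
  have ab0: "a j = 0 \<and> b j = 0" if "j < M" "j \<noteq> j0" for j
  proof -
    have "(a j)^2 + (b j)^2 + (a j - b j)^2 = 0" using j0(3)[OF that] by (simp add: t_def power2_eq_square algebra_simps)
    moreover have "(a j)^2 \<ge> 0" "(b j)^2 \<ge> 0" "(a j - b j)^2 \<ge> 0" by simp_all
    ultimately have "(a j)^2 = 0" "(b j)^2 = 0" by linarith+
    thus ?thesis by simp
  qed
  have collapse: "(\<Sum>j<M. of_int (c j) * eta^j) = of_int (c j0) * eta^j0"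
    if "\<And>j. j < M \<Longrightarrow> j \<noteq> j0 \<Longrightarrow> c j = 0" for c
  proof -
    have "(\<Sum>j<M. of_int (c j) * eta^j) = (\<Sum>j<M. if j = j0 then of_int (c j0) * eta^j0 else 0)"
      by (rule sum.cong) (use that in auto)
    also have "\<dots> = of_int (c j0) * eta^j0" using j0(1) by (simp add: sum.delta)
    finally show ?thesis .
  qed
  have A'e: "A' = of_int (a j0) * eta^j0"
    using cf_rep[OF A'Z] collapse[of a] ab0 by (simp add: a_def)
  have B'e: "B' = of_int (b j0) * eta^j0"
    using cf_rep[OF B'Z] collapse[of b] ab0 by (simp add: b_def)
  have xe: "x = 2^k * eta^j0 * (of_int (a j0) + of_int (b j0) * om)"
    by (simp add: xAB AA' BB' A'e B'e algebra_simps)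
  have "(a j0)^2 + (b j0)^2 - a j0 * b j0 = 1" using j0(2) by (simp add: t_def)
  from small_form[OF this] show ?thesis
  proof (elim disjE conjE)
    assume "a j0 = 1" "b j0 = 0"
    hence "x = 2^k * eta^(j0) * om^0" using xe by simp
    thus ?thesis by blast
  next
    assume "a j0 = -1" "b j0 = 0"
    hence "x = 2^k * eta^(j0 + M) * om^0" using xe eta_M by (simp add: power_add)
    thus ?thesis by blast
  next
    assume "a j0 = 0" "b j0 = 1"
    hence "x = 2^k * eta^(j0) * om^1" using xe by simp
    thus ?thesis by blast
  next
    assume "a j0 = 0" "b j0 = -1"
    hence "x = 2^k * eta^(j0 + M) * om^1" using xe eta_M by (simp add: power_add)
    thus ?thesis by blast
  next
    assume "a j0 = 1" "b j0 = 1"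
    hence "x = 2^k * eta^j0 * (1 + om)" using xe by simp
    also have "1 + om = - (om^2)" using om2 by simp
    also have "2^k * eta^j0 * - (om^2) = 2^k * eta^(j0 + M) * om^2" using eta_M by (simp add: power_add)
    finally have "x = 2^k * eta^(j0 + M) * om^2" .
    thus ?thesis by blast
  next
    assume "a j0 = -1" "b j0 = -1"
    hence "x = 2^k * eta^j0 * (- 1 - om)" using xe by simp
    also have "- 1 - om = om^2" using om2 by simp
    finally have "x = 2^k * eta^(j0) * om^2" .
    thus ?thesis by blast
  qed
qed

end

definition Zz :: "complex \<Rightarrow> complex set" where
  "Zz z = {x. \<exists>p::int poly. x = poly (map_poly of_int p) z}"

lemma Zz_add: "a \<in> Zz z \<Longrightarrow> b \<in> Zz z \<Longrightarrow> a + b \<in> Zz z"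
proof -
  assume "a \<in> Zz z" "b \<in> Zz z"
  then obtain p q where "a = poly (map_poly of_int p) z" "b = poly (map_poly of_int q) z"
    by (auto simp: Zz_def)
  hence "a + b = poly (map_poly of_int (p + q)) z" by (simp add: map_poly_of_int_add)
  thus ?thesis by (auto simp: Zz_def)
qed

lemma Zz_mult: "a \<in> Zz z \<Longrightarrow> b \<in> Zz z \<Longrightarrow> a * b \<in> Zz z"
proof -
  assume "a \<in> Zz z" "b \<in> Zz z"
  then obtain p q where "a = poly (map_poly of_int p) z" "b = poly (map_poly of_int q) z"
    by (auto simp: Zz_def)
  hence "a * b = poly (map_poly of_int (p * q)) z" by (simp add: map_poly_of_int_mult)
  thus ?thesis by (auto simp: Zz_def)
qed

lemma Zz_int: "of_int k \<in> Zz z"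
  unfolding Zz_def by (auto intro!: exI[of _ "[:k:]"] simp: map_poly_pCons)

lemma Zz_z: "z \<in> Zz z"
  unfolding Zz_def by (auto intro!: exI[of _ "[:0,1:]"] simp: map_poly_pCons)

lemma Zz_pow: "a \<in> Zz z \<Longrightarrow> a ^ k \<in> Zz z"
  by (induction k) (use Zz_int[of 1 z] Zz_mult in auto)

lemma Zz_poly: "w \<in> Zz z \<Longrightarrow> poly (map_poly of_int p) w \<in> Zz z"
  by (rule poly_in_subring) (simp_all add: Zz_add Zz_mult Zz_int)

lemma Zz_subring:
  assumes add: "\<And>a b. a \<in> S \<Longrightarrow> b \<in> S \<Longrightarrow> a + b \<in> S"
    and mul: "\<And>a b. a \<in> S \<Longrightarrow> b \<in> S \<Longrightarrow> a * b \<in> S"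
    and int: "\<And>k::int. of_int k \<in> S" and z: "z \<in> S"
  shows "Zz z \<subseteq> S"
  unfolding Zz_def using poly_in_subring[OF add mul int z] by blast

lemma Rn_altdef: "x \<in> Rn n \<longleftrightarrow> (\<exists>y\<in>Zz (zeta n). \<exists>k::nat. x = y / 2^k)"
  unfolding Rn_def Zz_def by auto

lemma Rn_Zz: "y \<in> Zz (zeta n) \<Longrightarrow> y \<in> Rn n"
  unfolding Rn_altdef by (auto intro!: exI[of _ 0])

lemma Rn_int: "of_int k \<in> Rn n" using Rn_Zz Zz_int by blast

lemma Rn_zeta_pow: "zeta n ^ k \<in> Rn n" using Rn_Zz Zz_pow Zz_z by blast

lemma Rn_add: "x \<in> Rn n \<Longrightarrow> y \<in> Rn n \<Longrightarrow> x + y \<in> Rn n"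
proof -
  assume "x \<in> Rn n" "y \<in> Rn n"
  then obtain a b k l where ab: "a \<in> Zz (zeta n)" "b \<in> Zz (zeta n)" "x = a / 2^k" "y = b / 2^l"
    unfolding Rn_altdef by blast
  have "x + y = (a * 2^l + b * 2^k) / (2^k * 2^l)" unfolding ab(3,4) by (rule add_frac_eq) simp_all
  also have "\<dots> = (2^l * a + 2^k * b) / 2^(k+l)" by (simp add: power_add mult.commute)
  finally have "x + y = (2^l * a + 2^k * b) / 2^(k+l)" .
  moreover have "2^l * a + 2^k * b \<in> Zz (zeta n)"
    using ab Zz_add Zz_mult Zz_int[of "2^l"] Zz_int[of "2^k"] by simp
  ultimately show ?thesis unfolding Rn_altdef by blast
qed

lemma Rn_mult: "x \<in> Rn n \<Longrightarrow> y \<in> Rn n \<Longrightarrow> x * y \<in> Rn n"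
proof -
  assume "x \<in> Rn n" "y \<in> Rn n"
  then obtain a b k l where ab: "a \<in> Zz (zeta n)" "b \<in> Zz (zeta n)" "x = a / 2^k" "y = b / 2^l"
    unfolding Rn_altdef by blast
  have "x * y = (a * b) / 2^(k+l)" using ab by (simp add: power_add)
  moreover have "a * b \<in> Zz (zeta n)" using ab Zz_mult by simp
  ultimately show ?thesis unfolding Rn_altdef by blast
qed

lemma Rn_uminus: "x \<in> Rn n \<Longrightarrow> - x \<in> Rn n"
  using Rn_mult[OF Rn_int[of "-1"]] by simp

lemma Rn_diff: "x \<in> Rn n \<Longrightarrow> y \<in> Rn n \<Longrightarrow> x - y \<in> Rn n"
  using Rn_add Rn_uminus by (metis diff_conv_add_uminus)

lemma Rn_0: "0 \<in> Rn n" using Rn_int[of 0] by simp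
lemma Rn_1: "1 \<in> Rn n" using Rn_int[of 1] by simp

lemma zeta_pow: "zeta n ^ k = cis (2 * pi * real k / real n)"
proof -
  have "zeta n ^ k = cis (real k * (2*pi/real n))" unfolding zeta_def by (rule Complex.DeMoivre)
  thus ?thesis by (simp add: field_simps)
qed

lemma zeta_n: "n > 0 \<Longrightarrow> zeta n ^ n = 1" by (simp add: zeta_pow)

lemma zeta_ne0: "zeta n \<noteq> 0" by (simp add: zeta_def)

lemma cnj_zeta: "n > 0 \<Longrightarrow> cnj (zeta n) = zeta n ^ (n - 1)"
proof -
  assume n: "n > 0"
  have "zeta n ^ (n - 1) * zeta n = 1" using zeta_n[OF n] n by (metis power_Suc2 Suc_diff_1)
  hence "zeta n ^ (n - 1) = inverse (zeta n)" using zeta_ne0 by (simp add: field_simps)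
  also have "inverse (zeta n) = cnj (zeta n)" by (simp add: zeta_def cis_cnj)
  finally show ?thesis by simp
qed

lemma Rn_cnj: "n > 0 \<Longrightarrow> x \<in> Rn n \<Longrightarrow> cnj x \<in> Rn n"
proof -
  assume n: "n > 0" and "x \<in> Rn n"
  then obtain p k where x: "x = poly (map_poly of_int p) (zeta n) / 2^k" unfolding Rn_def by blast
  have "cnj x = poly (map_poly of_int p) (zeta n ^ (n - 1)) / 2^k"
    by (simp add: x poly_cnj map_poly_cnj_of_int cnj_zeta[OF n])
  moreover have "poly (map_poly of_int p) (zeta n ^ (n - 1)) \<in> Zz (zeta n)"
    by (intro Zz_poly Zz_pow Zz_z)
  ultimately show ?thesis unfolding Rn_altdef by blast
qed

lemma roots_zeta_pow: "n > 0 \<Longrightarrow> z ^ n = 1 \<Longrightarrow> \<exists>k<n. z = zeta n ^ k"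
proof -
  assume n: "n > 0" and z: "z ^ n = 1"
  have "z \<in> (\<lambda>k. cis (2 * pi * real k / real n)) ` {..<n}"
    using Complex.bij_betw_roots_unity[OF n] z unfolding bij_betw_def by auto
  thus ?thesis by (auto simp: zeta_pow)
qed

lemma roots_Rn: "n > 0 \<Longrightarrow> z ^ n = 1 \<Longrightarrow> z \<in> Rn n"
  using roots_zeta_pow Rn_zeta_pow by blast

lemma zeta_pow_eq: "n > 0 \<Longrightarrow> zeta n ^ a = zeta n ^ b \<longleftrightarrow> a mod n = b mod n"
proof -
  assume n: "n > 0"
  have red: "zeta n ^ k = zeta n ^ (k mod n)" for k
  proof -
    have "zeta n ^ k = zeta n ^ (n * (k div n) + k mod n)" by (metis div_mult_mod_eq mult.commute)
    also have "\<dots> = (zeta n ^ n) ^ (k div n) * zeta n ^ (k mod n)" by (simp only: power_add power_mult)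
    finally show ?thesis using zeta_n[OF n] by simp
  qed
  have inj: "inj_on (\<lambda>k. cis (2 * pi * real k / real n)) {..<n}"
    using Complex.bij_betw_roots_unity[OF n] unfolding bij_betw_def by auto
  show ?thesis
  proof
    assume "zeta n ^ a = zeta n ^ b"
    hence "zeta n ^ (a mod n) = zeta n ^ (b mod n)" using red by metis
    hence "cis (2 * pi * real (a mod n) / real n) = cis (2 * pi * real (b mod n) / real n)"
      by (simp add: zeta_pow)
    thus "a mod n = b mod n" using inj_onD[OF inj] n by auto
  next
    assume "a mod n = b mod n"
    thus "zeta n ^ a = zeta n ^ b" using red by metis
  qed
qed


context cyc begin
lemma om_pow_cases: "om ^ e = 1 \<or> om ^ e = om \<or> om ^ e = om^2"
proof -
  have "om ^ e = om ^ (3 * (e div 3) + e mod 3)" by simp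
  also have "\<dots> = (om ^ 3) ^ (e div 3) * om ^ (e mod 3)" by (simp only: power_add power_mult)
  finally have "om ^ e = om ^ (e mod 3)" by (simp add: om3)
  moreover have "e mod 3 = 0 \<or> e mod 3 = 1 \<or> e mod 3 = 2" by auto
  ultimately show ?thesis by auto
qed
end

lemma nt_final:
  assumes n: "n = 2^s \<or> n = 3 * 2^s" and n8: "n \<ge> 8"
    and u: "u \<in> Rn n" and uu: "u * cnj u = 1"
  shows "u ^ n = 1"
proof -
  have s2: "s \<ge> 2"
  proof (rule ccontr)
    assume "\<not> s \<ge> 2"
    hence "s = 0 \<or> s = 1" by auto
    thus False using n n8 by auto
  qed
  interpret c: cyc s using s2 by unfold_locales
  obtain p k where upk: "u = poly (map_poly of_int p) (zeta n) / 2^k" using u unfolding Rn_def by blast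
  define x where "x = poly (map_poly of_int p) (zeta n)"
  have xu: "x = 2^k * u" using upk by (simp add: x_def)
  have xx: "x * cnj x = 4^k"
  proof -
    have "x * cnj x = (2^k * 2^k) * (u * cnj u)" by (simp add: xu mult_ac)
    also have "\<dots> = 4^k" using uu by (simp add: power_mult_distrib[symmetric])
    finally show ?thesis .
  qed
  from n show ?thesis
  proof
    assume n1: "n = 2^s"
    have z: "zeta n = c.eta" by (simp add: zeta_def c.eta_def c.N_def n1)
    have xZE: "x \<in> c.ZE" unfolding c.ZE_def x_def z by blast
    obtain j e where xje: "x = 2^k * c.eta^j * c.om^e" using c.nt_core[OF c.ZE_ZEW[OF xZE] xx] by blast
    have B: "(2::complex)^k * c.eta^j \<in> c.ZE" by (simp add: c.ZE_mult c.ZE_pow c.ZE_eta c.ZE_2)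
    have B0: "(2::complex)^k * c.eta^j \<noteq> 0" using c.eta_ne0 by simp
    have "c.om ^ e = 1"
    proof -
      { assume "c.om ^ e = c.om"
        hence "(- x) + (2^k * c.eta^j) * c.om = 0" using xje by simp
        hence False using c.om_indep[OF c.ZE_uminus[OF xZE] B] B0 by blast }
      moreover
      { assume "c.om ^ e = c.om^2"
        hence "x = 2^k * c.eta^j * (- 1 - c.om)" using xje c.om2 by simp
        hence "(x + 2^k * c.eta^j) + (2^k * c.eta^j) * c.om = 0" by (simp add: ring_distribs)
        hence False using c.om_indep[OF c.ZE_add[OF xZE B] B] B0 by blast }
      ultimately show ?thesis using c.om_pow_cases[of e] by blast
    qed
    hence "u = c.eta ^ j" using xu xje by simp
    hence "u ^ n = (c.eta ^ c.N) ^ j" by (simp add: n1 c.N_def power_mult[symmetric] mult.commute)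
    thus ?thesis by (simp add: c.eta_N)
  next
    assume n2: "n = 3 * 2^s"
    define z where "z = zeta n"
    have zpow: "z ^ m = cis (2 * pi * real m / real n)" for m by (simp add: z_def zeta_pow)
    have z3: "z ^ 3 = c.eta" by (simp add: zpow c.eta_def c.N_def n2)
    have zN: "z ^ c.N = c.om" by (simp add: zpow c.om_def c.N_def n2)
    have zn: "z ^ n = 1" using zeta_n[of n] n2 by (simp add: z_def)
    have m3: "(4::nat)^s mod 3 = 1" by (induction s) (auto simp: mod_mult_right_eq[symmetric])
    have N2: "c.N * c.N = 4^s" by (simp add: c.N_def power_mult_distrib[symmetric])
    define a where "a = (1 + 2 * c.N * c.N) div 3"
    have a3: "3 * a = 1 + 2 * c.N * c.N"
    proof -
      have "(1 + 2 * c.N * c.N) mod 3 = 0" using m3 N2 by (simp add: mod_add_eq[symmetric] mod_mult_right_eq[symmetric] mult.assoc) presburger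
      hence d: "3 dvd (1 + 2 * c.N * c.N)" by (simp only: dvd_eq_mod_eq_0)
      show ?thesis unfolding a_def by (rule dvd_mult_div_cancel[OF d])
    qed
    have "c.eta ^ a * c.om ^ c.N = z ^ (3 * a + c.N * c.N)"
      by (simp add: z3[symmetric] zN[symmetric] power_mult[symmetric] power_add)
    also have "3 * a + c.N * c.N = 1 + n * c.N" using a3 n2 by (simp add: c.N_def)
    also have "z ^ (1 + n * c.N) = z" by (simp add: power_add power_mult zn)
    finally have zew: "z = c.eta ^ a * c.om ^ c.N" ..
    have zZEW: "z \<in> c.ZEW" unfolding zew by (intro c.ZEW_mult c.ZEW_pow c.ZEW_eta c.ZEW_om)
    have "Zz z \<subseteq> c.ZEW" by (rule Zz_subring) (simp_all add: c.ZEW_add c.ZEW_mult c.ZEW_int zZEW)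
    moreover have "x \<in> Zz z" unfolding Zz_def x_def z_def by blast
    ultimately have xZEW: "x \<in> c.ZEW" by blast
    obtain j e where xje: "x = 2^k * c.eta^j * c.om^e" using c.nt_core[OF xZEW xx] by blast
    hence "u = c.eta ^ j * c.om ^ e" using xu by simp
    moreover have "c.eta ^ n = 1"
    proof -
      have "c.eta ^ n = (c.eta ^ c.N) ^ 3" by (simp add: n2 c.N_def power_mult[symmetric] mult.commute)
      thus ?thesis by (simp add: c.eta_N)
    qed
    moreover have "c.om ^ n = 1" using c.om3 by (simp add: n2 power_mult)
    ultimately show ?thesis
      by (simp add: power_mult_distrib power_mult[symmetric] mult.commute[of _ n])
        (simp add: power_mult)
  qed
qed


lemma two_ne: "(1::2) \<noteq> 2" by simp

lemmas mat_simps = vec_eq_iff forall_2 matrix_matrix_mult_def sum_2 ctrans_def mat_def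

lemma ctrans_mult: "ctrans ((A::complex^2^2) ** B) = ctrans B ** ctrans A"
  by (simp add: mat_simps mult.commute)

lemma ctrans_ctrans: "ctrans (ctrans A) = A"
  by (simp add: mat_simps)

lemma ctrans_mat: "ctrans (mat c) = mat (cnj c)"
  by (simp add: mat_simps)

lemma det_ctrans: "det (ctrans A) = cnj (det A)"
  by (simp add: det_2 ctrans_def mult.commute)

lemma det_mat2: "det (mat c :: complex^2^2) = c^2"
  by (simp add: det_2 mat_def power2_eq_square)

lemma mat_mult_mat: "mat c ** mat d = (mat (c * d) :: complex^2^2)"
  by (simp add: mat_simps)

lemma mat_comm: "mat c ** (A::complex^2^2) = A ** (mat c :: complex^2^2)"
  by (simp add: mat_simps mult.commute)

lemma mat_eq_iff: "(mat c :: complex^2^2) = mat d \<longleftrightarrow> c = d"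
  by (simp add: mat_simps)

lemma unitary_left: "A ** ctrans A = mat 1 \<Longrightarrow> ctrans A ** (A :: complex^2^2) = mat 1"
  using matrix_left_right_inverse by blast

lemma unitary_det: "A ** ctrans A = mat 1 \<Longrightarrow> det A * cnj (det A) = 1"
proof -
  assume "A ** ctrans A = mat 1"
  hence "det (A ** ctrans A) = det (mat 1 :: complex^2^2)" by simp
  thus ?thesis by (simp add: det_mul det_ctrans det_mat2)
qed

lemma prod_entries_Rn:
  fixes A B :: "complex^2^2"
  assumes "\<forall>i j. A $ i $ j \<in> Rn n" "\<forall>i j. B $ i $ j \<in> Rn n"
  shows "\<forall>i j. (A ** B) $ i $ j \<in> Rn n"
  using assms by (simp add: matrix_matrix_mult_def sum_2 Rn_add Rn_mult)

lemma U2_mult: "A \<in> U2_set n \<Longrightarrow> B \<in> U2_set n \<Longrightarrow> A ** B \<in> U2_set n"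
proof -
  assume A: "A \<in> U2_set n" and B: "B \<in> U2_set n"
  have "(A ** B) ** ctrans (A ** B) = A ** (B ** ctrans B) ** ctrans A"
    by (simp add: ctrans_mult matrix_mul_assoc)
  also have "\<dots> = mat 1" using A B by (simp add: U2_set_def)
  finally show ?thesis using A B prod_entries_Rn by (auto simp: U2_set_def)
qed

lemma mat_Rn: "c \<in> Rn n \<Longrightarrow> \<forall>i j. (mat c :: complex^2^2) $ i $ j \<in> Rn n"
  by (simp add: mat_def Rn_0)

lemma U2_one: "mat 1 \<in> U2_set n"
  by (simp add: U2_set_def mat_Rn Rn_1 ctrans_mat)

lemma ctrans_nth: "ctrans A $ i $ j = cnj (A $ j $ i)" by (simp add: ctrans_def)

lemma U2_ctrans: "n > 0 \<Longrightarrow> A \<in> U2_set n \<Longrightarrow> ctrans A \<in> U2_set n"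
proof -
  assume n: "n > 0" and A: "A \<in> U2_set n"
  have "ctrans A ** A = mat 1" using A unitary_left by (simp add: U2_set_def)
  thus ?thesis using A by (simp add: U2_set_def ctrans_ctrans ctrans_nth Rn_cnj[OF n])
qed

lemma group_U2: "n > 0 \<Longrightarrow> group (U2 n)"
proof (rule groupI)
  assume n: "n > 0"
  show "\<And>x y. x \<in> carrier (U2 n) \<Longrightarrow> y \<in> carrier (U2 n) \<Longrightarrow> x \<otimes>\<^bsub>U2 n\<^esub> y \<in> carrier (U2 n)"
    by (simp add: U2_def U2_mult)
  show "\<one>\<^bsub>U2 n\<^esub> \<in> carrier (U2 n)" by (simp add: U2_def U2_one)
  show "\<And>x y z. x \<in> carrier (U2 n) \<Longrightarrow> y \<in> carrier (U2 n) \<Longrightarrow> z \<in> carrier (U2 n) \<Longrightarrow>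
      x \<otimes>\<^bsub>U2 n\<^esub> y \<otimes>\<^bsub>U2 n\<^esub> z = x \<otimes>\<^bsub>U2 n\<^esub> (y \<otimes>\<^bsub>U2 n\<^esub> z)"
    by (simp add: U2_def matrix_mul_assoc)
  show "\<And>x. x \<in> carrier (U2 n) \<Longrightarrow> \<one>\<^bsub>U2 n\<^esub> \<otimes>\<^bsub>U2 n\<^esub> x = x"
    by (simp add: U2_def)
  show "\<And>x. x \<in> carrier (U2 n) \<Longrightarrow> \<exists>y\<in>carrier (U2 n). y \<otimes>\<^bsub>U2 n\<^esub> x = \<one>\<^bsub>U2 n\<^esub>"
  proof -
    fix x assume "x \<in> carrier (U2 n)"
    hence x: "x \<in> U2_set n" by (simp add: U2_def)
    hence "ctrans x \<in> U2_set n" "ctrans x ** x = mat 1"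
      using U2_ctrans[OF n] unitary_left by (auto simp: U2_set_def)
    thus "\<exists>y\<in>carrier (U2 n). y \<otimes>\<^bsub>U2 n\<^esub> x = \<one>\<^bsub>U2 n\<^esub>" by (auto simp: U2_def)
  qed
qed

lemma inv_U2: "n > 0 \<Longrightarrow> A \<in> U2_set n \<Longrightarrow> inv\<^bsub>U2 n\<^esub> A = ctrans A"
proof -
  assume n: "n > 0" and A: "A \<in> U2_set n"
  interpret group "U2 n" using group_U2[OF n] .
  show ?thesis
    by (rule inv_equality) (use A U2_ctrans[OF n A] unitary_left in \<open>auto simp: U2_def U2_set_def\<close>)
qed

lemma scalars_sub: "scalars n \<subseteq> U2_set n" by (auto simp: scalars_def)

lemma scalar_unit: "mat c \<in> U2_set n \<Longrightarrow> c * cnj c = 1 \<and> c \<in> Rn n"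
proof -
  assume A: "mat c \<in> U2_set n"
  hence "mat c ** ctrans (mat c) = (mat 1 :: complex^2^2)" by (simp add: U2_set_def)
  hence "c * cnj c = 1" by (simp add: ctrans_mat mat_mult_mat mat_eq_iff)
  moreover have "(mat c :: complex^2^2) $ 1 $ 1 \<in> Rn n" using A by (simp add: U2_set_def)
  ultimately show ?thesis by (simp add: mat_def)
qed

lemma scalars_normal: "n > 0 \<Longrightarrow> scalars n \<lhd> U2 n"
proof -
  assume n: "n > 0"
  interpret group "U2 n" using group_U2[OF n] .
  have sub: "subgroup (scalars n) (U2 n)"
  proof (rule subgroupI)
    show "scalars n \<subseteq> carrier (U2 n)" by (simp add: U2_def scalars_sub)
    show "scalars n \<noteq> {}" using U2_one by (auto simp: scalars_def)
    show "\<And>a. a \<in> scalars n \<Longrightarrow> inv\<^bsub>U2 n\<^esub> a \<in> scalars n"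
      using inv_U2[OF n] U2_ctrans[OF n] by (auto simp: scalars_def ctrans_mat)
    show "\<And>a b. a \<in> scalars n \<Longrightarrow> b \<in> scalars n \<Longrightarrow> a \<otimes>\<^bsub>U2 n\<^esub> b \<in> scalars n"
      using U2_mult by (auto simp: scalars_def U2_def mat_mult_mat)
  qed
  show ?thesis
    unfolding normal_inv_iff
  proof (intro conjI sub ballI)
    fix x h assume x: "x \<in> carrier (U2 n)" and h: "h \<in> scalars n"
    then obtain c where c: "h = mat c" by (auto simp: scalars_def)
    have xU: "x \<in> U2_set n" using x by (simp add: U2_def)
    have "x \<otimes>\<^bsub>U2 n\<^esub> h \<otimes>\<^bsub>U2 n\<^esub> inv\<^bsub>U2 n\<^esub> x = mat c ** (x ** ctrans x)"
      unfolding inv_U2[OF n xU] by (simp add: U2_def c mat_comm matrix_mul_assoc)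
    also have "\<dots> = h" using xU c by (simp add: U2_set_def)
    finally show "x \<otimes>\<^bsub>U2 n\<^esub> h \<otimes>\<^bsub>U2 n\<^esub> inv\<^bsub>U2 n\<^esub> x \<in> scalars n" using h by simp
  qed
qed


lemma group_mu: "n > 0 \<Longrightarrow> group (mu n)"
proof (rule groupI)
  assume n: "n > 0"
  show "\<And>x y. x \<in> carrier (mu n) \<Longrightarrow> y \<in> carrier (mu n) \<Longrightarrow> x \<otimes>\<^bsub>mu n\<^esub> y \<in> carrier (mu n)"
    by (simp add: mu_def power_mult_distrib)
  show "\<one>\<^bsub>mu n\<^esub> \<in> carrier (mu n)" by (simp add: mu_def)
  show "\<And>x y z. x \<in> carrier (mu n) \<Longrightarrow> y \<in> carrier (mu n) \<Longrightarrow> z \<in> carrier (mu n) \<Longrightarrow>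
      x \<otimes>\<^bsub>mu n\<^esub> y \<otimes>\<^bsub>mu n\<^esub> z = x \<otimes>\<^bsub>mu n\<^esub> (y \<otimes>\<^bsub>mu n\<^esub> z)"
    by (simp add: mu_def mult.assoc)
  show "\<And>x. x \<in> carrier (mu n) \<Longrightarrow> \<one>\<^bsub>mu n\<^esub> \<otimes>\<^bsub>mu n\<^esub> x = x" by (simp add: mu_def)
  show "\<And>x. x \<in> carrier (mu n) \<Longrightarrow> \<exists>y\<in>carrier (mu n). y \<otimes>\<^bsub>mu n\<^esub> x = \<one>\<^bsub>mu n\<^esub>"
  proof -
    fix x assume "x \<in> carrier (mu n)"
    hence x: "x ^ n = 1" by (simp add: mu_def)
    have "x ^ (n - 1) * x = 1" using x n by (metis power_Suc2 Suc_diff_1)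
    moreover have "(x ^ (n - 1)) ^ n = 1" using x by (simp add: power_mult[symmetric] mult.commute power_mult)
    ultimately show "\<exists>y\<in>carrier (mu n). y \<otimes>\<^bsub>mu n\<^esub> x = \<one>\<^bsub>mu n\<^esub>" by (auto simp: mu_def)
  qed
qed

lemma comm_group_mu: "n > 0 \<Longrightarrow> comm_group (mu n)"
  by (rule group.group_comm_groupI[OF group_mu]) (simp_all add: mu_def mult.commute)

lemma inv_mu: "n > 0 \<Longrightarrow> x \<in> carrier (mu n) \<Longrightarrow> inv\<^bsub>mu n\<^esub> x = x ^ (n - 1)"
proof -
  assume n: "n > 0" and x: "x \<in> carrier (mu n)"
  interpret group "mu n" using group_mu[OF n] .
  have x1: "x ^ n = 1" using x by (simp add: mu_def)
  have "x ^ (n - 1) * x = 1" using x1 n by (metis power_Suc2 Suc_diff_1)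
  moreover have "(x ^ (n - 1)) ^ n = 1" using x1 by (simp add: power_mult[symmetric] mult.commute power_mult)
  ultimately show ?thesis by (intro inv_equality) (use x in \<open>auto simp: mu_def\<close>)
qed

lemma mu_squares_sub: "n > 0 \<Longrightarrow> subgroup (mu_squares n) (mu n)"
proof -
  assume n: "n > 0"
  interpret group "mu n" using group_mu[OF n] .
  show ?thesis
  proof (rule subgroupI)
    show "mu_squares n \<subseteq> carrier (mu n)"
      by (auto simp: mu_squares_def mu_def power_mult[symmetric] mult.commute) (simp add: power_mult)
    show "mu_squares n \<noteq> {}" by (auto simp: mu_squares_def intro!: exI[of _ 1])
    show "\<And>a. a \<in> mu_squares n \<Longrightarrow> inv\<^bsub>mu n\<^esub> a \<in> mu_squares n"
    proof -
      fix a assume "a \<in> mu_squares n"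
      then obtain z where z: "a = z^2" "z^n = 1" by (auto simp: mu_squares_def)
      have "a \<in> carrier (mu n)" using z by (simp add: mu_def power_mult[symmetric] mult.commute) (simp add: power_mult)
      hence "inv\<^bsub>mu n\<^esub> a = (z ^ (n - 1))^2" using inv_mu[OF n] z by (simp add: power_mult[symmetric] mult.commute)
      moreover have "(z ^ (n - 1))^n = 1" using z by (simp add: power_mult[symmetric] mult.commute power_mult)
      ultimately show "inv\<^bsub>mu n\<^esub> a \<in> mu_squares n" by (auto simp: mu_squares_def)
    qed
    show "\<And>a b. a \<in> mu_squares n \<Longrightarrow> b \<in> mu_squares n \<Longrightarrow> a \<otimes>\<^bsub>mu n\<^esub> b \<in> mu_squares n"
    proof -
      fix a b assume "a \<in> mu_squares n" "b \<in> mu_squares n"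
      then obtain y z where "a = y^2" "y^n = 1" "b = z^2" "z^n = 1" by (auto simp: mu_squares_def)
      hence "a \<otimes>\<^bsub>mu n\<^esub> b = (y*z)^2" "(y*z)^n = 1" by (simp_all add: mu_def power_mult_distrib)
      thus "a \<otimes>\<^bsub>mu n\<^esub> b \<in> mu_squares n" by (auto simp: mu_squares_def)
    qed
  qed
qed

lemma mu_squares_normal: "n > 0 \<Longrightarrow> mu_squares n \<lhd> mu n"
  using comm_group.subgroup_imp_normal[OF comm_group_mu mu_squares_sub] by blast

lemma sq_iff: "n > 0 \<Longrightarrow> even n \<Longrightarrow> zeta n ^ k \<in> mu_squares n \<longleftrightarrow> even k"
proof
  assume n: "n > 0" and en: "even n" and "zeta n ^ k \<in> mu_squares n"
  then obtain y where y: "zeta n ^ k = y^2" "y^n = 1" by (auto simp: mu_squares_def)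
  obtain m where m: "y = zeta n ^ m" using roots_zeta_pow[OF n y(2)] by blast
  have "zeta n ^ k = zeta n ^ (2 * m)" using y m by (simp add: power_mult[symmetric] mult.commute)
  hence "k mod n = (2 * m) mod n" using zeta_pow_eq[OF n] by blast
  hence "k mod 2 = (2 * m) mod 2" using en by (metis mod_mod_cancel)
  thus "even k" by presburger
next
  assume n: "n > 0" and en: "even n" and "even k"
  then obtain m where "k = 2 * m" by blast
  hence "zeta n ^ k = (zeta n ^ m)^2" by (simp add: power_mult[symmetric] mult.commute)
  moreover have "(zeta n ^ m)^n = (zeta n ^ n)^m" by (simp only: power_mult[symmetric] mult.commute)
  hence "(zeta n ^ m)^n = 1" using zeta_n[OF n] by simp
  ultimately show "zeta n ^ k \<in> mu_squares n" by (auto simp: mu_squares_def)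
qed


definition chi :: "nat \<Rightarrow> complex \<Rightarrow> int" where
  "chi n z = (if z \<in> mu_squares n then 0 else 1)"

lemma chi_zeta: "n > 0 \<Longrightarrow> even n \<Longrightarrow> chi n (zeta n ^ k) = (if even k then 0 else 1)"
  by (simp add: chi_def sq_iff)

lemma mu_iso_Z2:
  assumes n: "n > 0" and en: "even n"
  shows "(mu n Mod mu_squares n) \<cong> integer_mod_group 2"
proof -
  have hom: "chi n \<in> hom (mu n) (integer_mod_group 2)"
  proof (rule homI)
    fix x assume "x \<in> carrier (mu n)"
    show "chi n x \<in> carrier (integer_mod_group 2)"
      by (simp add: carrier_integer_mod_group chi_def)
  next
    fix x y assume x: "x \<in> carrier (mu n)" and y: "y \<in> carrier (mu n)"
    obtain a where a: "x = zeta n ^ a" using roots_zeta_pow[OF n] x by (auto simp: mu_def)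
    obtain b where b: "y = zeta n ^ b" using roots_zeta_pow[OF n] y by (auto simp: mu_def)
    have xy: "x \<otimes>\<^bsub>mu n\<^esub> y = zeta n ^ (a + b)" by (simp add: mu_def a b power_add)
    show "chi n (x \<otimes>\<^bsub>mu n\<^esub> y) = chi n x \<otimes>\<^bsub>integer_mod_group 2\<^esub> chi n y"
    proof -
      have "chi n (x \<otimes>\<^bsub>mu n\<^esub> y) = (if even (a + b) then 0 else 1)" using xy chi_zeta[OF n en] by simp
      moreover have "chi n x = (if even a then 0 else 1)" "chi n y = (if even b then 0 else 1)"
        using a b chi_zeta[OF n en] by simp_all
      ultimately show ?thesis by (cases "even a"; cases "even b") auto
    qed
  qed
  have gh: "group_hom (mu n) (integer_mod_group 2) (chi n)"
    by (simp add: group_hom_def group_hom_axioms_def group_mu[OF n] hom)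
  have surj: "chi n ` carrier (mu n) = carrier (integer_mod_group 2)"
  proof
    show "chi n ` carrier (mu n) \<subseteq> carrier (integer_mod_group 2)"
      using hom by (auto simp: hom_def)
    have "chi n (zeta n ^ 0) = 0" "chi n (zeta n ^ 1) = 1"
      using chi_zeta[OF n en, of 0] chi_zeta[OF n en, of 1] by (simp_all del: power_0 power_one_right)
    moreover have "zeta n ^ 0 \<in> carrier (mu n)" "zeta n ^ 1 \<in> carrier (mu n)"
      using zeta_n[OF n] by (simp_all add: mu_def)
    ultimately have "0 \<in> chi n ` carrier (mu n)" "1 \<in> chi n ` carrier (mu n)" by (metis image_eqI)+
    moreover have "carrier (integer_mod_group 2) = {0, 1}" by (auto simp: carrier_integer_mod_group)
    ultimately show "carrier (integer_mod_group 2) \<subseteq> chi n ` carrier (mu n)" by auto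
  qed
  have ker: "kernel (mu n) (integer_mod_group 2) (chi n) = mu_squares n"
    using subgroup.subset[OF mu_squares_sub[OF n]] by (auto simp: kernel_def chi_def)
  show ?thesis using group_hom.FactGroup_iso[OF gh surj] ker by simp
qed


locale good =
  fixes n s :: nat
  assumes nform: "n = 2^s \<or> n = 3 * 2^s" and n8: "n \<ge> 8"
begin

lemma npos: "n > 0" using n8 by simp

lemma neven: "even n"
proof -
  have "s \<noteq> 0"
  proof
    assume "s = 0" thus False using nform n8 by auto
  qed
  thus ?thesis using nform by auto
qed

lemma unit_root: "u \<in> Rn n \<Longrightarrow> u * cnj u = 1 \<Longrightarrow> u ^ n = 1"
  using nt_final nform n8 by blast

lemma det_Rn: "A \<in> U2_set n \<Longrightarrow> det A \<in> Rn n"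
  by (simp add: det_2 U2_set_def Rn_diff Rn_mult)

lemma det_mu: "A \<in> U2_set n \<Longrightarrow> det A \<in> carrier (mu n)"
  using unit_root[OF det_Rn] unitary_det by (simp add: mu_def U2_set_def)

lemma root_norm: "z ^ n = 1 \<Longrightarrow> z * cnj z = 1"
proof -
  assume "z ^ n = 1"
  hence "norm z = 1" using power_eq_1_iff npos by blast
  thus ?thesis by (metis complex_norm_square of_real_1 one_power2)
qed

definition Phi :: "complex^2^2 \<Rightarrow> complex set" where
  "Phi A = mu_squares n #>\<^bsub>mu n\<^esub> det A"

definition Psi :: "(complex^2^2) set \<Rightarrow> complex set" where
  "Psi X = the_elem (Phi ` X)"

lemma grp: "group (U2 n)" "comm_group (mu n)" "scalars n \<lhd> U2 n" "mu_squares n \<lhd> mu n"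
  using group_U2 comm_group_mu scalars_normal mu_squares_normal npos by auto

lemma Phi_carrier: "A \<in> U2_set n \<Longrightarrow> Phi A \<in> carrier (mu n Mod mu_squares n)"
proof -
  assume A: "A \<in> U2_set n"
  interpret M: comm_group "mu n" using grp by simp
  show ?thesis unfolding Phi_def FactGroup_def
    using M.rcosetsI[OF subgroup.subset[OF mu_squares_sub[OF npos]] det_mu[OF A]] by simp
qed

lemma Phi_mult: "A \<in> U2_set n \<Longrightarrow> B \<in> U2_set n \<Longrightarrow> Phi (A ** B) = Phi A <#>\<^bsub>mu n\<^esub> Phi B"
proof -
  assume A: "A \<in> U2_set n" and B: "B \<in> U2_set n"
  interpret Q: normal "mu_squares n" "mu n" using grp by simp
  show ?thesis unfolding Phi_def
    using Q.rcos_sum[OF det_mu[OF A] det_mu[OF B]] by (simp add: det_mul mu_def)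
qed

lemma Phi_scalar: "S \<in> scalars n \<Longrightarrow> Phi S = mu_squares n"
proof -
  assume "S \<in> scalars n"
  then obtain c where S: "S = mat c" "mat c \<in> U2_set n" by (auto simp: scalars_def)
  have c: "c * cnj c = 1" "c \<in> Rn n" using scalar_unit[OF S(2)] by auto
  have cn: "c ^ n = 1" using unit_root[OF c(2) c(1)] .
  interpret M: comm_group "mu n" using grp by simp
  have "det S \<in> mu_squares n" using cn by (auto simp: S det_mat2 mu_squares_def)
  thus ?thesis unfolding Phi_def
    using M.coset_join2[OF det_mu[OF S(2)[folded S(1)]] mu_squares_sub[OF npos]] by simp
qed

lemma Phi_coset: "A \<in> U2_set n \<Longrightarrow> Phi ` (scalars n #>\<^bsub>U2 n\<^esub> A) = {Phi A}"
proof -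
  assume A: "A \<in> U2_set n"
  interpret Q: normal "mu_squares n" "mu n" using grp by simp
  have "Phi (h ** A) = Phi A" if h: "h \<in> scalars n" for h
  proof -
    have hU: "h \<in> U2_set n" using h scalars_sub by blast
    have "Phi (h ** A) = mu_squares n <#>\<^bsub>mu n\<^esub> Phi A" using Phi_mult[OF hU A] Phi_scalar[OF h] by simp
    also have "\<dots> = Phi A" using Q.rcosets_mult_eq Phi_carrier[OF A] by (simp add: FactGroup_def)
    finally show ?thesis .
  qed
  moreover have "mat 1 \<in> scalars n" using U2_one by (auto simp: scalars_def)
  ultimately show ?thesis unfolding r_coset_def by (auto simp: U2_def)
qed

lemma Psi_coset: "A \<in> U2_set n \<Longrightarrow> Psi (scalars n #>\<^bsub>U2 n\<^esub> A) = Phi A"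
  by (simp add: Psi_def Phi_coset)

lemma PU2_carrier: "X \<in> carrier (PU2 n) \<longleftrightarrow> (\<exists>A\<in>U2_set n. X = scalars n #>\<^bsub>U2 n\<^esub> A)"
  by (auto simp: PU2_def FactGroup_def RCOSETS_def U2_def)

lemma Psi_hom: "Psi \<in> hom (PU2 n) (mu n Mod mu_squares n)"
proof (rule homI)
  fix X assume "X \<in> carrier (PU2 n)"
  then obtain A where A: "A \<in> U2_set n" "X = scalars n #>\<^bsub>U2 n\<^esub> A" using PU2_carrier by blast
  show "Psi X \<in> carrier (mu n Mod mu_squares n)" using Psi_coset[OF A(1)] Phi_carrier[OF A(1)] A(2) by simp
next
  fix X Y assume "X \<in> carrier (PU2 n)" "Y \<in> carrier (PU2 n)"
  then obtain A B where A: "A \<in> U2_set n" "X = scalars n #>\<^bsub>U2 n\<^esub> A"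
    and B: "B \<in> U2_set n" "Y = scalars n #>\<^bsub>U2 n\<^esub> B" using PU2_carrier by metis
  interpret S: normal "scalars n" "U2 n" using grp by simp
  have "X \<otimes>\<^bsub>PU2 n\<^esub> Y = scalars n #>\<^bsub>U2 n\<^esub> (A ** B)"
    using S.rcos_sum[of A B] A B by (simp add: PU2_def U2_def)
  hence "Psi (X \<otimes>\<^bsub>PU2 n\<^esub> Y) = Phi (A ** B)" using Psi_coset U2_mult[OF A(1) B(1)] by simp
  also have "\<dots> = Phi A <#>\<^bsub>mu n\<^esub> Phi B" using Phi_mult A B by simp
  finally show "Psi (X \<otimes>\<^bsub>PU2 n\<^esub> Y) = Psi X \<otimes>\<^bsub>mu n Mod mu_squares n\<^esub> Psi Y"
    using Psi_coset A B by simp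
qed

lemma Psi_group_hom: "group_hom (PU2 n) (mu n Mod mu_squares n) Psi"
proof -
  interpret S: normal "scalars n" "U2 n" using grp by simp
  interpret Q: normal "mu_squares n" "mu n" using grp by simp
  show ?thesis
    by (simp add: group_hom_def group_hom_axioms_def PU2_def S.factorgroup_is_group
        Q.factorgroup_is_group Psi_hom[unfolded PU2_def])
qed

definition dg :: "complex \<Rightarrow> complex^2^2" where
  "dg z = (\<chi> i j. if i = j then (if i = 1 then z else 1) else 0)"

lemma dg_U2: "z ^ n = 1 \<Longrightarrow> dg z \<in> U2_set n"
proof -
  assume z: "z ^ n = 1"
  have zz: "z * cnj z = 1" using root_norm[OF z] .
  have "dg z ** ctrans (dg z) = mat 1" using zz by (simp add: mat_simps dg_def)
  moreover have "\<forall>i j. dg z $ i $ j \<in> Rn n"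
    using roots_Rn[OF npos z] Rn_0 Rn_1 by (simp add: dg_def)
  ultimately show ?thesis by (simp add: U2_set_def)
qed

lemma det_dg: "det (dg z) = z" by (simp add: det_2 dg_def)

lemma Psi_surj: "Psi ` carrier (PU2 n) = carrier (mu n Mod mu_squares n)"
proof
  show "Psi ` carrier (PU2 n) \<subseteq> carrier (mu n Mod mu_squares n)" using Psi_hom by (auto simp: hom_def)
  show "carrier (mu n Mod mu_squares n) \<subseteq> Psi ` carrier (PU2 n)"
  proof
    fix Y assume "Y \<in> carrier (mu n Mod mu_squares n)"
    then obtain z where z: "z \<in> carrier (mu n)" "Y = mu_squares n #>\<^bsub>mu n\<^esub> z"
      by (auto simp: FactGroup_def RCOSETS_def)
    have zn: "z ^ n = 1" using z by (simp add: mu_def)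
    have "Psi (scalars n #>\<^bsub>U2 n\<^esub> dg z) = Y" using Psi_coset[OF dg_U2[OF zn]] z by (simp add: Phi_def det_dg)
    moreover have "scalars n #>\<^bsub>U2 n\<^esub> dg z \<in> carrier (PU2 n)" using PU2_carrier dg_U2[OF zn] by blast
    ultimately show "Y \<in> Psi ` carrier (PU2 n)" by blast
  qed
qed

lemma Psi_kernel: "kernel (PU2 n) (mu n Mod mu_squares n) Psi = PSU2 n"
proof
  interpret U: group "U2 n" using grp by simp
  interpret M: comm_group "mu n" using grp by simp
  have subS: "subgroup (scalars n) (U2 n)" using grp normal_imp_subgroup by blast
  show "kernel (PU2 n) (mu n Mod mu_squares n) Psi \<subseteq> PSU2 n"
  proof
    fix X assume "X \<in> kernel (PU2 n) (mu n Mod mu_squares n) Psi"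
    hence X: "X \<in> carrier (PU2 n)" "Psi X = mu_squares n" by (auto simp: kernel_def)
    then obtain A where A: "A \<in> U2_set n" "X = scalars n #>\<^bsub>U2 n\<^esub> A" using PU2_carrier by blast
    have "Phi A = mu_squares n" using X(2) Psi_coset[OF A(1)] A(2) by simp
    hence "det A \<in> mu_squares n"
      using M.rcos_self[OF det_mu[OF A(1)] mu_squares_sub[OF npos]] by (simp add: Phi_def)
    then obtain z where z: "det A = z^2" "z^n = 1" by (auto simp: mu_squares_def)
    define c where "c = cnj z"
    have cn: "c ^ n = 1" using z(2) by (simp add: c_def flip: complex_cnj_power)
    have cc: "c * cnj c = 1" using root_norm[OF z(2)] by (simp add: c_def mult.commute)
    have mc: "mat c \<in> U2_set n"
      using cc roots_Rn[OF npos cn] by (simp add: U2_set_def mat_Rn ctrans_mat mat_mult_mat)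
    hence mcS: "mat c \<in> scalars n" by (auto simp: scalars_def)
    define B where "B = mat c ** A"
    have BU: "B \<in> U2_set n" using U2_mult[OF mc A(1)] by (simp add: B_def)
    have "det B = (c * z)^2" by (simp add: B_def det_mul det_mat2 z(1) power_mult_distrib)
    also have "c * z = 1" using root_norm[OF z(2)] by (simp add: c_def mult.commute)
    finally have BS: "B \<in> SU2_set n" using BU by (simp add: SU2_set_def)
    have "B \<in> scalars n #>\<^bsub>U2 n\<^esub> A" using mcS by (auto simp: r_coset_def U2_def B_def)
    hence "scalars n #>\<^bsub>U2 n\<^esub> A = scalars n #>\<^bsub>U2 n\<^esub> B"
      using U.repr_independence[OF _ _ subS] A(1) by (simp add: U2_def)
    thus "X \<in> PSU2 n" using BS A(2) by (auto simp: PSU2_def)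
  qed
  show "PSU2 n \<subseteq> kernel (PU2 n) (mu n Mod mu_squares n) Psi"
  proof
    fix X assume "X \<in> PSU2 n"
    then obtain A where A: "A \<in> SU2_set n" "X = scalars n #>\<^bsub>U2 n\<^esub> A" by (auto simp: PSU2_def)
    have AU: "A \<in> U2_set n" using A(1) by (simp add: SU2_set_def)
    have "Psi X = mu_squares n #>\<^bsub>mu n\<^esub> 1" using Psi_coset[OF AU] A by (simp add: Phi_def SU2_set_def)
    also have "\<dots> = mu_squares n"
      using M.coset_mult_one[OF subgroup.subset[OF mu_squares_sub[OF npos]]] by (simp add: mu_def)
    finally show "X \<in> kernel (PU2 n) (mu n Mod mu_squares n) Psi"
      using PU2_carrier AU A(2) by (auto simp: kernel_def)
  qed
qed

theorem main_iso: "PSU2 n \<lhd> PU2 n \<and> (PU2 n Mod PSU2 n) \<cong> (mu n Mod mu_squares n)"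
  using group_hom.normal_kernel[OF Psi_group_hom] group_hom.FactGroup_iso[OF Psi_group_hom Psi_surj]
  by (simp add: Psi_kernel)

end

theorem proposition3p22:
  fixes n s :: nat
  assumes "n = 2 ^ s \<or> n = 3 * 2 ^ s"
    and "n \<ge> 8"
  shows "PSU2 n \<lhd> PU2 n
    \<and> (PU2 n Mod PSU2 n) \<cong> (mu n Mod mu_squares n)
    \<and> (mu n Mod mu_squares n) \<cong> integer_mod_group 2"
proof -
  interpret good n s using assms by unfold_locales
  show ?thesis using main_iso mu_iso_Z2[OF npos neven] by blast
qed


end
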